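(* Let $\mathcal{K}$ be a 2-category. The assignment sending a monad $(X,S,m,s)$ to the relative monad $(X,1_X,S)$ with unit $s$ and extension $f\mapsto mB\cdot Sf$ (for $f\colon A\Rightarrow SB$), a 1-cell $(F,\phi)$ to $(F,F,\phi)$ and a 2-cell $p$ to $(p,p)$, defines a 2-functor $\mathbf{Mnd}(\mathcal{K}^{op})^{op}\to\mathbf{Rmd}(\mathcal{K})$ which is injective on objects, whose image on objects is exactly the relative monads $(X,I,S)$ with $X_0=X$ and $I=1_X$, and which is an isomorphism on every hom-category. Thus $\mathbf{Mnd}(\mathcal{K}^{op})^{op}$ is a full, locally full sub-2-category of $\mathbf{Rmd}(\mathcal{K})$.
   Context: Conventions: 1-cells compose by juxtaposition; vertical composition of 2-cells is written $\cdot$; whiskering by juxtaposition. $\mathbf{Mnd}(\mathcal{K}^{op})^{op}$: objects are monads $(X,S,m,s)$ in $\mathcal{K}$; a 1-cell $(X,S)\to(Y,T)$ (with $T$ having multiplication $n$ and unit $t$) is a pair $(F,\phi)$ with $F\colon X\to Y$ and $\phi\colon FS\Rightarrow TF$ such that $\phi\cdot Fs=tF$ and $\phi\cdot Fm=nF\cdot T\phi\cdot\phi S$; a 2-cell $(F,\phi)\Rightarrow(F',\phi')$ is $p\colon F\Rightarrow F'$ with $\phi'\cdot pS=Tp\cdot\phi$. Operator: given 1-cells $F\colon X\to Z$, $G\colon Y\to Z$, $F'\colon X\to Z'$, $G'\colon Y\to Z'$, an operator $(-)^\#\colon[F,G]\to[F',G']$ is a family of functions, indexed by spans $A\colon O\to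 X$, $B\colon O\to Y$, $(-)^\#_{A,B}\colon\mathcal{K}[O,Z](FA,GB)\to\mathcal{K}[O,Z'](F'A,G'B)$, with $(fP)^\#=f^\#P$, $(f\cdot F\alpha)^\#=f^\#\cdot F'\alpha$, $(G\beta\cdot f)^\#=G'\beta\cdot f^\#$ for all 1-cells $P\colon O'\to O$ and 2-cells $\alpha\colon A'\Rightarrow A$, $\beta\colon B\Rightarrow B'$. Relative monad: a relative monad $(X,I,S)$ in $\mathcal{K}$ consists of objects $X_0,X$, 1-cells $I,S\colon X_0\to X$, an operator $(-)^\dagger=(-)^\dagger_S\colon[I,S]\to[S,S]$ (extension) and a 2-cell $s\colon I\Rightarrow S$ (unit) such that for all 1-cells $A,B,C\colon O\to X_0$ and 2-cells $k\colon IA\Rightarrow SB$, $l\colon IB\Rightarrow SC$: $k^\dagger\cdot sA=k$; $(sA)^\dagger=1_{SA}$; $(l^\dagger\cdot k)^\dagger=l^\dagger\cdot k^\dagger$. $\mathbf{Rmd}(\mathcal{K})$: a relative monad morphism $(F,F_0,\phi)\colon(X,I,S)\to(Y,J,T)$ (with $I\colon X_0\to X$, $J\colon Y_0\to Y$, units $s,t$) consists of 1-cells $F\colon X\to Y$, $F_0\colon X_0\to Y_0$ with $FI=JF_0$ and a 2-cell $\phi\colon FS\Rightarrow TF_0$ such that $\phi\cdot Fs=tF_0$ and, for all $A,B\colon O\to X_0$ and $k\colon IA\Rightarrow SB$, $\phi B\cdot F(k^\dagger_S)=(\phi B\cdot Fk)^\dagger_T\cdot\phi A$. A relative monad transformation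 $(p,p_0)\colon(F,F_0,\phi)\Rightarrow(F',F'_0,\phi')$ consists of 2-cells $p\colon F\Rightarrow F'$, $p_0\colon F_0\Rightarrow F'_0$ with $Jp_0=pI$ and $\phi'\cdot pS=Tp_0\cdot\phi$. These form a 2-category $\mathbf{Rmd}(\mathcal{K})$; the composite of $(F,F_0,\phi)$ followed by $(G,G_0,\gamma)$ is $(GF,G_0F_0,\gamma F_0\cdot G\phi)$, identities are $(1_X,1_{X_0},1_S)$, 2-cells compose componentwise. Full sub-2-category: a 2-functor $J\colon\mathcal{K}\to\mathcal{L}$ exhibits a full sub-2-category if each $J_{x,y}\colon\mathcal{K}(x,y)\to\mathcal{L}(Jx,Jy)$ is an equivalence. *)

theory Defs
  imports Main
begin

text \<open>Composition of 1-cells is in applicative order: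
Comp1 C G F is "GF" (first F, then G). VComp C b a is b . a (first a).
HComp C b a is the horizontal composite "ba" (a on the right, i.e. applied first).\<close>

record ('o,'a,'c) two_cat =
  Obj :: "'o set"
  Arr :: "'a set"
  Cel :: "'c set"
  dom1 :: "'a \<Rightarrow> 'o"
  cod1 :: "'a \<Rightarrow> 'o"
  dom2 :: "'c \<Rightarrow> 'a"
  cod2 :: "'c \<Rightarrow> 'a"
  Id1 :: "'o \<Rightarrow> 'a"
  Comp1 :: "'a \<Rightarrow> 'a \<Rightarrow> 'a"
  Id2 :: "'a \<Rightarrow> 'c"
  VComp :: "'c \<Rightarrow> 'c \<Rightarrow> 'c"
  HComp :: "'c \<Rightarrow> 'c \<Rightarrow> 'c"

definition hom :: "('o,'a,'c) two_cat \<Rightarrow> 'o \<Rightarrow> 'o \<Rightarrow> 'a set" where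
  "hom C x y = {f \<in> Arr C. dom1 C f = x \<and> cod1 C f = y}"

definition cell :: "('o,'a,'c) two_cat \<Rightarrow> 'a \<Rightarrow> 'a \<Rightarrow> 'c set" where
  "cell C f g = {\<alpha> \<in> Cel C. dom2 C \<alpha> = f \<and> cod2 C \<alpha> = g}"

text \<open>Whiskering: lwhisk C F a = "F a", rwhisk C a F = "a F".\<close>
definition lwhisk :: "('o,'a,'c) two_cat \<Rightarrow> 'a \<Rightarrow> 'c \<Rightarrow> 'c" where
  "lwhisk C F \<alpha> = HComp C (Id2 C F) \<alpha>"

definition rwhisk :: "('o,'a,'c) two_cat \<Rightarrow> 'c \<Rightarrow> 'a \<Rightarrow> 'c" where
  "rwhisk C \<alpha> F = HComp C \<alpha> (Id2 C F)"

locale two_category =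
  fixes C :: "('o,'a,'c) two_cat"
  assumes arr_dom_cod: "f \<in> Arr C \<Longrightarrow> dom1 C f \<in> Obj C \<and> cod1 C f \<in> Obj C"
    and id1_hom: "x \<in> Obj C \<Longrightarrow> Id1 C x \<in> hom C x x"
    and comp1_hom: "f \<in> hom C x y \<Longrightarrow> g \<in> hom C y z \<Longrightarrow> Comp1 C g f \<in> hom C x z"
    and comp1_assoc: "f \<in> hom C w x \<Longrightarrow> g \<in> hom C x y \<Longrightarrow> h \<in> hom C y z \<Longrightarrow>
        Comp1 C h (Comp1 C g f) = Comp1 C (Comp1 C h g) f"
    and comp1_idl: "f \<in> hom C x y \<Longrightarrow> Comp1 C (Id1 C y) f = f"
    and comp1_idr: "f \<in> hom C x y \<Longrightarrow> Comp1 C f (Id1 C x) = f"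
    and cel_parallel: "\<alpha> \<in> Cel C \<Longrightarrow> \<exists>x y. dom2 C \<alpha> \<in> hom C x y \<and> cod2 C \<alpha> \<in> hom C x y"
    and id2_cell: "f \<in> Arr C \<Longrightarrow> Id2 C f \<in> cell C f f"
    and vcomp_cell: "\<alpha> \<in> cell C f g \<Longrightarrow> \<beta> \<in> cell C g h \<Longrightarrow> VComp C \<beta> \<alpha> \<in> cell C f h"
    and vcomp_assoc: "\<alpha> \<in> cell C f g \<Longrightarrow> \<beta> \<in> cell C g h \<Longrightarrow> \<gamma> \<in> cell C h k \<Longrightarrow>
        VComp C \<gamma> (VComp C \<beta> \<alpha>) = VComp C (VComp C \<gamma> \<beta>) \<alpha>"
    and vcomp_idl: "\<alpha> \<in> cell C f g \<Longrightarrow> VComp C (Id2 C g) \<alpha> = \<alpha>"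
    and vcomp_idr: "\<alpha> \<in> cell C f g \<Longrightarrow> VComp C \<alpha> (Id2 C f) = \<alpha>"
    and hcomp_cell: "\<alpha> \<in> cell C f f' \<Longrightarrow> \<beta> \<in> cell C g g' \<Longrightarrow> f \<in> hom C x y \<Longrightarrow> g \<in> hom C y z \<Longrightarrow>
        HComp C \<beta> \<alpha> \<in> cell C (Comp1 C g f) (Comp1 C g' f')"
    and hcomp_assoc: "\<alpha> \<in> cell C f f' \<Longrightarrow> \<beta> \<in> cell C g g' \<Longrightarrow> \<gamma> \<in> cell C h h' \<Longrightarrow>
        f \<in> hom C w x \<Longrightarrow> g \<in> hom C x y \<Longrightarrow> h \<in> hom C y z \<Longrightarrow>
        HComp C \<gamma> (HComp C \<beta> \<alpha>) = HComp C (HComp C \<gamma> \<beta>) \<alpha>"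
    and hcomp_idl: "\<alpha> \<in> cell C f f' \<Longrightarrow> f \<in> hom C x y \<Longrightarrow> HComp C (Id2 C (Id1 C y)) \<alpha> = \<alpha>"
    and hcomp_idr: "\<alpha> \<in> cell C f f' \<Longrightarrow> f \<in> hom C x y \<Longrightarrow> HComp C \<alpha> (Id2 C (Id1 C x)) = \<alpha>"
    and hcomp_id2: "f \<in> hom C x y \<Longrightarrow> g \<in> hom C y z \<Longrightarrow>
        HComp C (Id2 C g) (Id2 C f) = Id2 C (Comp1 C g f)"
    and interchange: "\<alpha> \<in> cell C f f' \<Longrightarrow> \<alpha>' \<in> cell C f' f'' \<Longrightarrow>
        \<beta> \<in> cell C g g' \<Longrightarrow> \<beta>' \<in> cell C g' g'' \<Longrightarrow> f \<in> hom C x y \<Longrightarrow> g \<in> hom C y z \<Longrightarrow>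
        HComp C (VComp C \<beta>' \<beta>) (VComp C \<alpha>' \<alpha>) = VComp C (HComp C \<beta>' \<alpha>') (HComp C \<beta> \<alpha>)"

definition two_functor ::
  "('o,'a,'c) two_cat \<Rightarrow> ('p,'b,'d) two_cat \<Rightarrow> ('o \<Rightarrow> 'p) \<Rightarrow> ('a \<Rightarrow> 'b) \<Rightarrow> ('c \<Rightarrow> 'd) \<Rightarrow> bool" where
  "two_functor C D P0 P1 P2 \<longleftrightarrow>
     (\<forall>x\<in>Obj C. P0 x \<in> Obj D) \<and>
     (\<forall>x\<in>Obj C. \<forall>y\<in>Obj C. \<forall>f\<in>hom C x y. P1 f \<in> hom D (P0 x) (P0 y)) \<and>
     (\<forall>f\<in>Arr C. \<forall>g\<in>Arr C. \<forall>\<alpha>\<in>cell C f g. P2 \<alpha> \<in> cell D (P1 f) (P1 g)) \<and>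
     (\<forall>x\<in>Obj C. P1 (Id1 C x) = Id1 D (P0 x)) \<and>
     (\<forall>x\<in>Obj C. \<forall>y\<in>Obj C. \<forall>z\<in>Obj C. \<forall>f\<in>hom C x y. \<forall>g\<in>hom C y z.
        P1 (Comp1 C g f) = Comp1 D (P1 g) (P1 f)) \<and>
     (\<forall>f\<in>Arr C. P2 (Id2 C f) = Id2 D (P1 f)) \<and>
     (\<forall>f\<in>Arr C. \<forall>g\<in>Arr C. \<forall>h\<in>Arr C. \<forall>\<alpha>\<in>cell C f g. \<forall>\<beta>\<in>cell C g h.
        P2 (VComp C \<beta> \<alpha>) = VComp D (P2 \<beta>) (P2 \<alpha>)) \<and>
     (\<forall>x\<in>Obj C. \<forall>y\<in>Obj C. \<forall>z\<in>Obj C. \<forall>f\<in>hom C x y. \<forall>f'\<in>hom C x y.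
        \<forall>g\<in>hom C y z. \<forall>g'\<in>hom C y z. \<forall>\<alpha>\<in>cell C f f'. \<forall>\<beta>\<in>cell C g g'.
        P2 (HComp C \<beta> \<alpha>) = HComp D (P2 \<beta>) (P2 \<alpha>))"

definition locally_iso ::
  "('o,'a,'c) two_cat \<Rightarrow> ('p,'b,'d) two_cat \<Rightarrow> ('o \<Rightarrow> 'p) \<Rightarrow> ('a \<Rightarrow> 'b) \<Rightarrow> ('c \<Rightarrow> 'd) \<Rightarrow> bool" where
  "locally_iso C D P0 P1 P2 \<longleftrightarrow>
     (\<forall>x\<in>Obj C. \<forall>y\<in>Obj C. bij_betw P1 (hom C x y) (hom D (P0 x) (P0 y)) \<and>
        (\<forall>f\<in>hom C x y. \<forall>g\<in>hom C x y. bij_betw P2 (cell C f g) (cell D (P1 f) (P1 g))))"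

record ('o,'a,'c) monad_data =
  mX :: 'o
  mS :: 'a
  mmul :: 'c
  munit :: 'c

definition is_monad :: "('o,'a,'c) two_cat \<Rightarrow> ('o,'a,'c) monad_data \<Rightarrow> bool" where
  "is_monad K M \<longleftrightarrow>
    (let X = mX M; S = mS M; m = mmul M; s = munit M in
      X \<in> Obj K \<and> S \<in> hom K X X \<and> m \<in> cell K (Comp1 K S S) S \<and> s \<in> cell K (Id1 K X) S \<and>
      VComp K m (lwhisk K S m) = VComp K m (rwhisk K m S) \<and>
      VComp K m (rwhisk K s S) = Id2 K S \<and>
      VComp K m (lwhisk K S s) = Id2 K S)"

record ('o,'a,'c) mnd_cell1 =
  msrc :: "('o,'a,'c) monad_data"
  mtgt :: "('o,'a,'c) monad_data"
  mF :: 'a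
  mphi :: 'c

definition is_mnd_cell1 :: "('o,'a,'c) two_cat \<Rightarrow> ('o,'a,'c) mnd_cell1 \<Rightarrow> bool" where
  "is_mnd_cell1 K f \<longleftrightarrow>
    (let M = msrc f; N = mtgt f; F = mF f; \<phi> = mphi f;
         S = mS M; m = mmul M; s = munit M; T = mS N; n = mmul N; t = munit N in
      is_monad K M \<and> is_monad K N \<and> F \<in> hom K (mX M) (mX N) \<and>
      \<phi> \<in> cell K (Comp1 K F S) (Comp1 K T F) \<and>
      VComp K \<phi> (lwhisk K F s) = rwhisk K t F \<and>
      VComp K \<phi> (lwhisk K F m) = VComp K (rwhisk K n F) (VComp K (lwhisk K T \<phi>) (rwhisk K \<phi> S)))"

record ('o,'a,'c) mnd_cell2 =
  m2src :: "('o,'a,'c) mnd_cell1"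
  m2tgt :: "('o,'a,'c) mnd_cell1"
  m2p :: 'c

definition is_mnd_cell2 :: "('o,'a,'c) two_cat \<Rightarrow> ('o,'a,'c) mnd_cell2 \<Rightarrow> bool" where
  "is_mnd_cell2 K c \<longleftrightarrow>
    (let f = m2src c; g = m2tgt c; p = m2p c in
      is_mnd_cell1 K f \<and> is_mnd_cell1 K g \<and> msrc f = msrc g \<and> mtgt f = mtgt g \<and>
      p \<in> cell K (mF f) (mF g) \<and>
      VComp K (mphi g) (rwhisk K p (mS (msrc f))) = VComp K (lwhisk K (mS (mtgt f)) p) (mphi f))"

definition mnd_comp1 :: "('o,'a,'c) two_cat \<Rightarrow> ('o,'a,'c) mnd_cell1 \<Rightarrow> ('o,'a,'c) mnd_cell1 \<Rightarrow> ('o,'a,'c) mnd_cell1" where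
  "mnd_comp1 K g f = \<lparr>msrc = msrc f, mtgt = mtgt g, mF = Comp1 K (mF g) (mF f),
      mphi = VComp K (rwhisk K (mphi g) (mF f)) (lwhisk K (mF g) (mphi f))\<rparr>"

definition Mnd :: "('o,'a,'c) two_cat \<Rightarrow>
    (('o,'a,'c) monad_data, ('o,'a,'c) mnd_cell1, ('o,'a,'c) mnd_cell2) two_cat" where
  "Mnd K = \<lparr>Obj = {M. is_monad K M}, Arr = {f. is_mnd_cell1 K f}, Cel = {c. is_mnd_cell2 K c},
     dom1 = msrc, cod1 = mtgt, dom2 = m2src, cod2 = m2tgt,
     Id1 = (\<lambda>M. \<lparr>msrc = M, mtgt = M, mF = Id1 K (mX M), mphi = Id2 K (mS M)\<rparr>),
     Comp1 = mnd_comp1 K,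
     Id2 = (\<lambda>f. \<lparr>m2src = f, m2tgt = f, m2p = Id2 K (mF f)\<rparr>),
     VComp = (\<lambda>\<beta> \<alpha>. \<lparr>m2src = m2src \<alpha>, m2tgt = m2tgt \<beta>, m2p = VComp K (m2p \<beta>) (m2p \<alpha>)\<rparr>),
     HComp = (\<lambda>\<beta> \<alpha>. \<lparr>m2src = mnd_comp1 K (m2src \<beta>) (m2src \<alpha>), m2tgt = mnd_comp1 K (m2tgt \<beta>) (m2tgt \<alpha>),
                      m2p = HComp K (m2p \<beta>) (m2p \<alpha>)\<rparr>)\<rparr>"

text \<open>An operator [F,G] \<rightarrow> [F',G'] is represented as a function op A B f, defined
(i.e. different from undefined) exactly on the well-typed triples: A : O \<rightarrow> X, B : O \<rightarrow> Y,
f : FA \<Rightarrow> GB.\<close>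

definition op_dom :: "('o,'a,'c) two_cat \<Rightarrow> 'a \<Rightarrow> 'a \<Rightarrow> ('a \<times> 'a \<times> 'c) set" where
  "op_dom K F G = {(A, B, f). \<exists>Ob\<in>Obj K. A \<in> hom K Ob (dom1 K F) \<and> B \<in> hom K Ob (dom1 K G) \<and>
      f \<in> cell K (Comp1 K F A) (Comp1 K G B)}"

definition is_operator :: "('o,'a,'c) two_cat \<Rightarrow> 'a \<Rightarrow> 'a \<Rightarrow> 'a \<Rightarrow> 'a \<Rightarrow> ('a \<Rightarrow> 'a \<Rightarrow> 'c \<Rightarrow> 'c) \<Rightarrow> bool" where
  "is_operator K F G F' G' op \<longleftrightarrow>
    (\<forall>(A, B, f)\<in>op_dom K F G. op A B f \<in> cell K (Comp1 K F' A) (Comp1 K G' B)) \<and>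
    (\<forall>A B f. (A, B, f) \<notin> op_dom K F G \<longrightarrow> op A B f = undefined) \<and>
    (\<forall>(A, B, f)\<in>op_dom K F G. \<forall>Ob'\<in>Obj K. \<forall>P\<in>hom K Ob' (dom1 K A).
        op (Comp1 K A P) (Comp1 K B P) (rwhisk K f P) = rwhisk K (op A B f) P) \<and>
    (\<forall>(A, B, f)\<in>op_dom K F G. \<forall>A'. \<forall>\<alpha>\<in>cell K A' A.
        op A' B (VComp K f (lwhisk K F \<alpha>)) = VComp K (op A B f) (lwhisk K F' \<alpha>)) \<and>
    (\<forall>(A, B, f)\<in>op_dom K F G. \<forall>B'. \<forall>\<beta>\<in>cell K B B'.
        op A B' (VComp K (lwhisk K G \<beta>) f) = VComp K (lwhisk K G' \<beta>) (op A B f))"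

record ('o,'a,'c) relmonad_data =
  rX0 :: 'o
  rX :: 'o
  rI :: 'a
  rS :: 'a
  rext :: "'a \<Rightarrow> 'a \<Rightarrow> 'c \<Rightarrow> 'c"
  runit :: 'c

definition is_relmonad :: "('o,'a,'c) two_cat \<Rightarrow> ('o,'a,'c) relmonad_data \<Rightarrow> bool" where
  "is_relmonad K R \<longleftrightarrow>
    (let X0 = rX0 R; X = rX R; I = rI R; S = rS R; e = rext R; s = runit R in
      X0 \<in> Obj K \<and> X \<in> Obj K \<and> I \<in> hom K X0 X \<and> S \<in> hom K X0 X \<and>
      is_operator K I S S S e \<and> s \<in> cell K I S \<and>
      (\<forall>Ob\<in>Obj K. \<forall>A\<in>hom K Ob X0. \<forall>B\<in>hom K Ob X0. \<forall>k\<in>cell K (Comp1 K I A) (Comp1 K S B).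
          VComp K (e A B k) (rwhisk K s A) = k) \<and>
      (\<forall>Ob\<in>Obj K. \<forall>A\<in>hom K Ob X0. e A A (rwhisk K s A) = Id2 K (Comp1 K S A)) \<and>
      (\<forall>Ob\<in>Obj K. \<forall>A\<in>hom K Ob X0. \<forall>B\<in>hom K Ob X0. \<forall>D\<in>hom K Ob X0.
        \<forall>k\<in>cell K (Comp1 K I A) (Comp1 K S B). \<forall>l\<in>cell K (Comp1 K I B) (Comp1 K S D).
          e A D (VComp K (e B D l) k) = VComp K (e B D l) (e A B k)))"

record ('o,'a,'c) rmd_cell1 =
  rsrc :: "('o,'a,'c) relmonad_data"
  rtgt :: "('o,'a,'c) relmonad_data"
  rF :: 'a
  rF0 :: 'a
  rphi :: 'c

definition is_rmd_cell1 :: "('o,'a,'c) two_cat \<Rightarrow> ('o,'a,'c) rmd_cell1 \<Rightarrow> bool" where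
  "is_rmd_cell1 K f \<longleftrightarrow>
    (let R = rsrc f; Q = rtgt f; F = rF f; F0 = rF0 f; \<phi> = rphi f in
      is_relmonad K R \<and> is_relmonad K Q \<and>
      F \<in> hom K (rX R) (rX Q) \<and> F0 \<in> hom K (rX0 R) (rX0 Q) \<and>
      Comp1 K F (rI R) = Comp1 K (rI Q) F0 \<and>
      \<phi> \<in> cell K (Comp1 K F (rS R)) (Comp1 K (rS Q) F0) \<and>
      VComp K \<phi> (lwhisk K F (runit R)) = rwhisk K (runit Q) F0 \<and>
      (\<forall>Ob\<in>Obj K. \<forall>A\<in>hom K Ob (rX0 R). \<forall>B\<in>hom K Ob (rX0 R).
        \<forall>k\<in>cell K (Comp1 K (rI R) A) (Comp1 K (rS R) B).
          VComp K (rwhisk K \<phi> B) (lwhisk K F (rext R A B k)) =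
          VComp K (rext Q (Comp1 K F0 A) (Comp1 K F0 B) (VComp K (rwhisk K \<phi> B) (lwhisk K F k)))
                  (rwhisk K \<phi> A)))"

record ('o,'a,'c) rmd_cell2 =
  r2src :: "('o,'a,'c) rmd_cell1"
  r2tgt :: "('o,'a,'c) rmd_cell1"
  r2p :: 'c
  r2p0 :: 'c

definition is_rmd_cell2 :: "('o,'a,'c) two_cat \<Rightarrow> ('o,'a,'c) rmd_cell2 \<Rightarrow> bool" where
  "is_rmd_cell2 K c \<longleftrightarrow>
    (let f = r2src c; g = r2tgt c; p = r2p c; p0 = r2p0 c in
      is_rmd_cell1 K f \<and> is_rmd_cell1 K g \<and> rsrc f = rsrc g \<and> rtgt f = rtgt g \<and>
      p \<in> cell K (rF f) (rF g) \<and> p0 \<in> cell K (rF0 f) (rF0 g) \<and>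
      lwhisk K (rI (rtgt f)) p0 = rwhisk K p (rI (rsrc f)) \<and>
      VComp K (rphi g) (rwhisk K p (rS (rsrc f))) = VComp K (lwhisk K (rS (rtgt f)) p0) (rphi f))"

definition rmd_comp1 :: "('o,'a,'c) two_cat \<Rightarrow> ('o,'a,'c) rmd_cell1 \<Rightarrow> ('o,'a,'c) rmd_cell1 \<Rightarrow> ('o,'a,'c) rmd_cell1" where
  "rmd_comp1 K g f = \<lparr>rsrc = rsrc f, rtgt = rtgt g, rF = Comp1 K (rF g) (rF f),
      rF0 = Comp1 K (rF0 g) (rF0 f),
      rphi = VComp K (rwhisk K (rphi g) (rF0 f)) (lwhisk K (rF g) (rphi f))\<rparr>"

definition Rmd :: "('o,'a,'c) two_cat \<Rightarrow>
    (('o,'a,'c) relmonad_data, ('o,'a,'c) rmd_cell1, ('o,'a,'c) rmd_cell2) two_cat" where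
  "Rmd K = \<lparr>Obj = {R. is_relmonad K R}, Arr = {f. is_rmd_cell1 K f}, Cel = {c. is_rmd_cell2 K c},
     dom1 = rsrc, cod1 = rtgt, dom2 = r2src, cod2 = r2tgt,
     Id1 = (\<lambda>R. \<lparr>rsrc = R, rtgt = R, rF = Id1 K (rX R), rF0 = Id1 K (rX0 R), rphi = Id2 K (rS R)\<rparr>),
     Comp1 = rmd_comp1 K,
     Id2 = (\<lambda>f. \<lparr>r2src = f, r2tgt = f, r2p = Id2 K (rF f), r2p0 = Id2 K (rF0 f)\<rparr>),
     VComp = (\<lambda>\<beta> \<alpha>. \<lparr>r2src = r2src \<alpha>, r2tgt = r2tgt \<beta>, r2p = VComp K (r2p \<beta>) (r2p \<alpha>),
                      r2p0 = VComp K (r2p0 \<beta>) (r2p0 \<alpha>)\<rparr>),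
     HComp = (\<lambda>\<beta> \<alpha>. \<lparr>r2src = rmd_comp1 K (r2src \<beta>) (r2src \<alpha>), r2tgt = rmd_comp1 K (r2tgt \<beta>) (r2tgt \<alpha>),
                      r2p = HComp K (r2p \<beta>) (r2p \<alpha>), r2p0 = HComp K (r2p0 \<beta>) (r2p0 \<alpha>)\<rparr>)\<rparr>"

definition mnd_to_rmd_obj :: "('o,'a,'c) two_cat \<Rightarrow> ('o,'a,'c) monad_data \<Rightarrow> ('o,'a,'c) relmonad_data" where
  "mnd_to_rmd_obj K M = \<lparr>rX0 = mX M, rX = mX M, rI = Id1 K (mX M), rS = mS M,
     rext = (\<lambda>A B f. if (A, B, f) \<in> op_dom K (Id1 K (mX M)) (mS M)
                      then VComp K (rwhisk K (mmul M) B) (lwhisk K (mS M) f) else undefined),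
     runit = munit M\<rparr>"

definition mnd_to_rmd_1 :: "('o,'a,'c) two_cat \<Rightarrow> ('o,'a,'c) mnd_cell1 \<Rightarrow> ('o,'a,'c) rmd_cell1" where
  "mnd_to_rmd_1 K f = \<lparr>rsrc = mnd_to_rmd_obj K (msrc f), rtgt = mnd_to_rmd_obj K (mtgt f),
     rF = mF f, rF0 = mF f, rphi = mphi f\<rparr>"

definition mnd_to_rmd_2 :: "('o,'a,'c) two_cat \<Rightarrow> ('o,'a,'c) mnd_cell2 \<Rightarrow> ('o,'a,'c) rmd_cell2" where
  "mnd_to_rmd_2 K c = \<lparr>r2src = mnd_to_rmd_1 K (m2src c), r2tgt = mnd_to_rmd_1 K (m2tgt c),
     r2p = m2p c, r2p0 = m2p c\<rparr>"

end

theory Submission imports Defs begin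

context two_category begin

lemma hom_unique: "f \<in> hom C x y \<Longrightarrow> f \<in> hom C x' y' \<Longrightarrow> x' = x \<and> y' = y"
  by (simp add: hom_def)

lemma hom_arr: "f \<in> hom C x y \<Longrightarrow> f \<in> Arr C \<and> x \<in> Obj C \<and> y \<in> Obj C"
  using arr_dom_cod by (auto simp: hom_def)

lemma cell_cod_hom: "\<alpha> \<in> cell C f g \<Longrightarrow> f \<in> hom C x y \<Longrightarrow> g \<in> hom C x y"
  using cel_parallel[of \<alpha>] hom_unique by (auto simp: cell_def) (metis hom_unique)

lemma cell_dom_hom: "\<alpha> \<in> cell C f g \<Longrightarrow> g \<in> hom C x y \<Longrightarrow> f \<in> hom C x y"
  using cel_parallel[of \<alpha>] hom_unique by (auto simp: cell_def) (metis hom_unique)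

lemma id2_cell': "f \<in> hom C x y \<Longrightarrow> Id2 C f \<in> cell C f f"
  using id2_cell hom_arr by blast

lemma lwhisk_cell: "\<alpha> \<in> cell C f g \<Longrightarrow> f \<in> hom C x y \<Longrightarrow> F \<in> hom C y z \<Longrightarrow>
   lwhisk C F \<alpha> \<in> cell C (Comp1 C F f) (Comp1 C F g)"
  unfolding lwhisk_def by (rule hcomp_cell[OF _ id2_cell']) auto

lemma rwhisk_cell: "\<alpha> \<in> cell C f g \<Longrightarrow> f \<in> hom C y z \<Longrightarrow> P \<in> hom C x y \<Longrightarrow>
   rwhisk C \<alpha> P \<in> cell C (Comp1 C f P) (Comp1 C g P)"
  unfolding rwhisk_def by (rule hcomp_cell[OF id2_cell']) auto

lemma lwhisk_vcomp: "\<alpha> \<in> cell C f g \<Longrightarrow> \<beta> \<in> cell C g h \<Longrightarrow> f \<in> hom C x y \<Longrightarrow> F \<in> hom C y z \<Longrightarrow>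
   lwhisk C F (VComp C \<beta> \<alpha>) = VComp C (lwhisk C F \<beta>) (lwhisk C F \<alpha>)"
proof -
  assume a: "\<alpha> \<in> cell C f g" "\<beta> \<in> cell C g h" "f \<in> hom C x y" "F \<in> hom C y z"
  have i: "Id2 C F \<in> cell C F F" using a id2_cell' by blast
  have "HComp C (VComp C (Id2 C F) (Id2 C F)) (VComp C \<beta> \<alpha>) =
        VComp C (HComp C (Id2 C F) \<beta>) (HComp C (Id2 C F) \<alpha>)"
    by (rule interchange[OF a(1,2) i i a(3,4)])
  then show ?thesis using vcomp_idl[OF i] by (simp add: lwhisk_def)
qed

lemma rwhisk_vcomp: "\<alpha> \<in> cell C f g \<Longrightarrow> \<beta> \<in> cell C g h \<Longrightarrow> f \<in> hom C y z \<Longrightarrow> P \<in> hom C x y \<Longrightarrow>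
   rwhisk C (VComp C \<beta> \<alpha>) P = VComp C (rwhisk C \<beta> P) (rwhisk C \<alpha> P)"
proof -
  assume a: "\<alpha> \<in> cell C f g" "\<beta> \<in> cell C g h" "f \<in> hom C y z" "P \<in> hom C x y"
  have i: "Id2 C P \<in> cell C P P" using a id2_cell' by blast
  have "HComp C (VComp C \<beta> \<alpha>) (VComp C (Id2 C P) (Id2 C P)) =
        VComp C (HComp C \<beta> (Id2 C P)) (HComp C \<alpha> (Id2 C P))"
    by (rule interchange[OF i i a(1,2) a(4,3)])
  then show ?thesis using vcomp_idl[OF i] by (simp add: rwhisk_def)
qed

lemma lwhisk_id2: "f \<in> hom C x y \<Longrightarrow> F \<in> hom C y z \<Longrightarrow> lwhisk C F (Id2 C f) = Id2 C (Comp1 C F f)"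
  unfolding lwhisk_def by (rule hcomp_id2)

lemma rwhisk_id2: "f \<in> hom C y z \<Longrightarrow> P \<in> hom C x y \<Longrightarrow> rwhisk C (Id2 C f) P = Id2 C (Comp1 C f P)"
  unfolding rwhisk_def by (rule hcomp_id2)

lemma lwhisk_Id1: "\<alpha> \<in> cell C f g \<Longrightarrow> f \<in> hom C x y \<Longrightarrow> lwhisk C (Id1 C y) \<alpha> = \<alpha>"
  unfolding lwhisk_def by (rule hcomp_idl)

lemma rwhisk_Id1: "\<alpha> \<in> cell C f g \<Longrightarrow> f \<in> hom C x y \<Longrightarrow> rwhisk C \<alpha> (Id1 C x) = \<alpha>"
  unfolding rwhisk_def by (rule hcomp_idr)

lemma lwhisk_lwhisk: "\<alpha> \<in> cell C f g \<Longrightarrow> f \<in> hom C w x \<Longrightarrow> F \<in> hom C x y \<Longrightarrow> G \<in> hom C y z \<Longrightarrow>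
   lwhisk C G (lwhisk C F \<alpha>) = lwhisk C (Comp1 C G F) \<alpha>"
  unfolding lwhisk_def
  by (subst hcomp_assoc[OF _ id2_cell' id2_cell']; (assumption)?) (simp_all add: hcomp_id2)

lemma rwhisk_rwhisk: "\<alpha> \<in> cell C f g \<Longrightarrow> f \<in> hom C y z \<Longrightarrow> P \<in> hom C x y \<Longrightarrow> Q \<in> hom C w x \<Longrightarrow>
   rwhisk C (rwhisk C \<alpha> P) Q = rwhisk C \<alpha> (Comp1 C P Q)"
proof -
  assume a: "\<alpha> \<in> cell C f g" "f \<in> hom C y z" "P \<in> hom C x y" "Q \<in> hom C w x"
  have "HComp C \<alpha> (HComp C (Id2 C P) (Id2 C Q)) = HComp C (HComp C \<alpha> (Id2 C P)) (Id2 C Q)"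
    by (rule hcomp_assoc[OF id2_cell'[OF a(4)] id2_cell'[OF a(3)] a(1) a(4,3,2)])
  then show ?thesis using a by (simp add: rwhisk_def hcomp_id2)
qed

lemma lwhisk_rwhisk: "\<alpha> \<in> cell C f g \<Longrightarrow> f \<in> hom C x y \<Longrightarrow> P \<in> hom C w x \<Longrightarrow> F \<in> hom C y z \<Longrightarrow>
   lwhisk C F (rwhisk C \<alpha> P) = rwhisk C (lwhisk C F \<alpha>) P"
  unfolding lwhisk_def rwhisk_def
  by (rule hcomp_assoc[OF id2_cell' _ id2_cell']) auto

lemma natural: "\<alpha> \<in> cell C f f' \<Longrightarrow> \<beta> \<in> cell C g g' \<Longrightarrow> f \<in> hom C x y \<Longrightarrow> g \<in> hom C y z \<Longrightarrow>
   VComp C (rwhisk C \<beta> f') (lwhisk C g \<alpha>) = VComp C (lwhisk C g' \<alpha>) (rwhisk C \<beta> f)"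
proof -
  assume a: "\<alpha> \<in> cell C f f'" "\<beta> \<in> cell C g g'" "f \<in> hom C x y" "g \<in> hom C y z"
  have f': "f' \<in> hom C x y" and g': "g' \<in> hom C y z" using a cell_cod_hom by blast+
  have i1: "Id2 C f \<in> cell C f f" "Id2 C f' \<in> cell C f' f'" "Id2 C g \<in> cell C g g" "Id2 C g' \<in> cell C g' g'"
    using a f' g' id2_cell' by blast+
  have "HComp C (VComp C \<beta> (Id2 C g)) (VComp C (Id2 C f') \<alpha>) =
        VComp C (HComp C \<beta> (Id2 C f')) (HComp C (Id2 C g) \<alpha>)"
    by (rule interchange[OF a(1) i1(2) i1(3) a(2) a(3,4)])
  moreover have "HComp C (VComp C (Id2 C g') \<beta>) (VComp C \<alpha> (Id2 C f)) =
        VComp C (HComp C (Id2 C g') \<alpha>) (HComp C \<beta> (Id2 C f))"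
    by (rule interchange[OF i1(1) a(1) a(2) i1(4) a(3,4)])
  ultimately show ?thesis using a vcomp_idl vcomp_idr by (simp add: lwhisk_def rwhisk_def)
qed

end

locale mon = two_category +
  fixes X S m s
  assumes X: "X \<in> Obj C" and S: "S \<in> hom C X X"
    and m: "m \<in> cell C (Comp1 C S S) S" and s: "s \<in> cell C (Id1 C X) S"
    and assoc: "VComp C m (lwhisk C S m) = VComp C m (rwhisk C m S)"
    and unitl: "VComp C m (rwhisk C s S) = Id2 C S"
    and unitr: "VComp C m (lwhisk C S s) = Id2 C S"
begin

definition E where "E A B f = VComp C (rwhisk C m B) (lwhisk C S f)"

lemma I: "Id1 C X \<in> hom C X X" using id1_hom X by blast
lemma SS: "Comp1 C S S \<in> hom C X X" using comp1_hom S by blast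

lemma SB: "B \<in> hom C Ob X \<Longrightarrow> Comp1 C S B \<in> hom C Ob X" using comp1_hom S by blast
lemma SSB: "B \<in> hom C Ob X \<Longrightarrow> Comp1 C S (Comp1 C S B) \<in> hom C Ob X" using comp1_hom S by blast
lemma IB: "B \<in> hom C Ob X \<Longrightarrow> Comp1 C (Id1 C X) B = B" using comp1_idl by blast
lemma SSa: "B \<in> hom C Ob X \<Longrightarrow> Comp1 C (Comp1 C S S) B = Comp1 C S (Comp1 C S B)"
  using comp1_assoc S by metis

lemma mB: "B \<in> hom C Ob X \<Longrightarrow> rwhisk C m B \<in> cell C (Comp1 C S (Comp1 C S B)) (Comp1 C S B)"
  using rwhisk_cell[OF m SS] SSa by metis

lemma sB: "B \<in> hom C Ob X \<Longrightarrow> rwhisk C s B \<in> cell C B (Comp1 C S B)"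
  using rwhisk_cell[OF s I] IB by metis

lemma Sk: "k \<in> cell C A g \<Longrightarrow> A \<in> hom C Ob X \<Longrightarrow> lwhisk C S k \<in> cell C (Comp1 C S A) (Comp1 C S g)"
  using lwhisk_cell[OF _ _ S] by blast

lemma E_cell: assumes "A \<in> hom C Ob X" "B \<in> hom C Ob X" "k \<in> cell C A (Comp1 C S B)"
  shows "E A B k \<in> cell C (Comp1 C S A) (Comp1 C S B)"
  unfolding E_def using vcomp_cell[OF Sk[OF assms(3,1)] mB[OF assms(2)]] .

lemma R1: assumes A: "A \<in> hom C Ob X" and B: "B \<in> hom C Ob X" and k: "k \<in> cell C A (Comp1 C S B)"
  shows "VComp C (E A B k) (rwhisk C s A) = k"
proof -
  have nat0: "VComp C (rwhisk C s (Comp1 C S B)) (lwhisk C (Id1 C X) k) = VComp C (lwhisk C S k) (rwhisk C s A)"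
    by (rule natural[OF k s A I])
  have nat: "VComp C (lwhisk C S k) (rwhisk C s A) = VComp C (rwhisk C s (Comp1 C S B)) k"
    using nat0 lwhisk_Id1[OF k A] by simp
  have sSB: "rwhisk C s (Comp1 C S B) \<in> cell C (Comp1 C S B) (Comp1 C S (Comp1 C S B))"
    using sB[OF SB[OF B]] .
  have sS: "rwhisk C s S \<in> cell C S (Comp1 C S S)" using rwhisk_cell[OF s I S] comp1_idl[OF S] by simp
  have eq1: "rwhisk C s (Comp1 C S B) = rwhisk C (rwhisk C s S) B" using rwhisk_rwhisk[OF s I S B] by simp
  have eq2: "VComp C (rwhisk C m B) (rwhisk C s (Comp1 C S B)) = Id2 C (Comp1 C S B)"
    using rwhisk_vcomp[OF sS m S B] unitl rwhisk_id2[OF S B] eq1 by simp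
  have "VComp C (E A B k) (rwhisk C s A) = VComp C (VComp C (rwhisk C m B) (lwhisk C S k)) (rwhisk C s A)"
    by (simp add: E_def)
  also have "\<dots> = VComp C (rwhisk C m B) (VComp C (lwhisk C S k) (rwhisk C s A))"
    using vcomp_assoc[OF sB[OF A] Sk[OF k A] mB[OF B]] by simp
  also have "\<dots> = VComp C (rwhisk C m B) (VComp C (rwhisk C s (Comp1 C S B)) k)" using nat by simp
  also have "\<dots> = VComp C (VComp C (rwhisk C m B) (rwhisk C s (Comp1 C S B))) k"
    using vcomp_assoc[OF k sSB mB[OF B]] .
  also have "\<dots> = k" using eq2 vcomp_idl[OF k] by simp
  finally show ?thesis .
qed

lemma R2: assumes A: "A \<in> hom C Ob X"
  shows "E A A (rwhisk C s A) = Id2 C (Comp1 C S A)"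
proof -
  have Ss: "lwhisk C S s \<in> cell C S (Comp1 C S S)" using lwhisk_cell[OF s I S] comp1_idr[OF S] by simp
  have "E A A (rwhisk C s A) = VComp C (rwhisk C m A) (rwhisk C (lwhisk C S s) A)"
    unfolding E_def using lwhisk_rwhisk[OF s I A S] by simp
  also have "\<dots> = rwhisk C (VComp C m (lwhisk C S s)) A" using rwhisk_vcomp[OF Ss m S A] by simp
  also have "\<dots> = Id2 C (Comp1 C S A)" using unitr rwhisk_id2[OF S A] by simp
  finally show ?thesis .
qed

lemma R3: assumes A: "A \<in> hom C Ob X" and B: "B \<in> hom C Ob X" and D: "D \<in> hom C Ob X"
  and k: "k \<in> cell C A (Comp1 C S B)" and l: "l \<in> cell C B (Comp1 C S D)"
  shows "E A D (VComp C (E B D l) k) = VComp C (E B D l) (E A B k)"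
proof -
  note SBh = SB[OF B] and SDh = SB[OF D]
  have El: "E B D l \<in> cell C (Comp1 C S B) (Comp1 C S D)" by (rule E_cell[OF B D l])
  have Sl: "lwhisk C S l \<in> cell C (Comp1 C S B) (Comp1 C S (Comp1 C S D))" by (rule Sk[OF l B])
  have Skk: "lwhisk C S k \<in> cell C (Comp1 C S A) (Comp1 C S (Comp1 C S B))" by (rule Sk[OF k A])
  note mD = mB[OF D] and mBB = mB[OF B]
  have mSD: "rwhisk C m (Comp1 C S D) \<in> cell C (Comp1 C S (Comp1 C S (Comp1 C S D))) (Comp1 C S (Comp1 C S D))"
    by (rule mB[OF SDh])
  have SmD: "lwhisk C S (rwhisk C m D) \<in> cell C (Comp1 C S (Comp1 C S (Comp1 C S D))) (Comp1 C S (Comp1 C S D))"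
    by (rule Sk[OF mD SB[OF SDh]])
  have SSl: "lwhisk C S (lwhisk C S l) \<in> cell C (Comp1 C S (Comp1 C S B)) (Comp1 C S (Comp1 C S (Comp1 C S D)))"
    by (rule Sk[OF Sl SBh])
  have Sm: "lwhisk C S m \<in> cell C (Comp1 C S (Comp1 C S S)) (Comp1 C S S)" by (rule lwhisk_cell[OF m SS S])
  have mS: "rwhisk C m S \<in> cell C (Comp1 C (Comp1 C S S) S) (Comp1 C S S)" by (rule rwhisk_cell[OF m SS S])
  have as1: "VComp C (rwhisk C m D) (lwhisk C S (rwhisk C m D)) = VComp C (rwhisk C m D) (rwhisk C m (Comp1 C S D))"
  proof -
    have "VComp C (rwhisk C m D) (lwhisk C S (rwhisk C m D)) = rwhisk C (VComp C m (lwhisk C S m)) D"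
      using rwhisk_vcomp[OF Sm m _ D] lwhisk_rwhisk[OF m SS D S] comp1_hom[OF SS S] by simp
    also have "\<dots> = rwhisk C (VComp C m (rwhisk C m S)) D" using assoc by simp
    also have "\<dots> = VComp C (rwhisk C m D) (rwhisk C m (Comp1 C S D))"
      using rwhisk_vcomp[OF mS m _ D] rwhisk_rwhisk[OF m SS S D] comp1_hom[OF S SS] by simp
    finally show ?thesis .
  qed
  have nat: "VComp C (rwhisk C m (Comp1 C S D)) (lwhisk C S (lwhisk C S l)) = VComp C (lwhisk C S l) (rwhisk C m B)"
    using natural[OF l m B SS] lwhisk_lwhisk[OF l B S S] by simp
  have "E A D (VComp C (E B D l) k) = VComp C (rwhisk C m D) (VComp C (lwhisk C S (E B D l)) (lwhisk C S k))"
    unfolding E_def[of A D] using lwhisk_vcomp[OF k El A S] by simp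
  also have "lwhisk C S (E B D l) = VComp C (lwhisk C S (rwhisk C m D)) (lwhisk C S (lwhisk C S l))"
    unfolding E_def using lwhisk_vcomp[OF Sl mD SBh S] .
  also have "VComp C (rwhisk C m D) (VComp C (VComp C (lwhisk C S (rwhisk C m D)) (lwhisk C S (lwhisk C S l))) (lwhisk C S k))
      = VComp C (VComp C (rwhisk C m D) (VComp C (lwhisk C S (rwhisk C m D)) (lwhisk C S (lwhisk C S l)))) (lwhisk C S k)"
    using vcomp_assoc[OF Skk vcomp_cell[OF SSl SmD] mD] .
  also have "VComp C (rwhisk C m D) (VComp C (lwhisk C S (rwhisk C m D)) (lwhisk C S (lwhisk C S l)))
      = VComp C (VComp C (rwhisk C m D) (lwhisk C S (rwhisk C m D))) (lwhisk C S (lwhisk C S l))"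
    using vcomp_assoc[OF SSl SmD mD] .
  also have "\<dots> = VComp C (VComp C (rwhisk C m D) (rwhisk C m (Comp1 C S D))) (lwhisk C S (lwhisk C S l))"
    using as1 by simp
  also have "\<dots> = VComp C (rwhisk C m D) (VComp C (rwhisk C m (Comp1 C S D)) (lwhisk C S (lwhisk C S l)))"
    using vcomp_assoc[OF SSl mSD mD] by simp
  also have "\<dots> = VComp C (rwhisk C m D) (VComp C (lwhisk C S l) (rwhisk C m B))" using nat by simp
  also have "\<dots> = VComp C (E B D l) (rwhisk C m B)"
    unfolding E_def using vcomp_assoc[OF mBB Sl mD] .
  also have "VComp C (VComp C (E B D l) (rwhisk C m B)) (lwhisk C S k) = VComp C (E B D l) (E A B k)"
    unfolding E_def[of A B] using vcomp_assoc[OF Skk mBB El] by simp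
  finally show ?thesis .
qed

end

context mon begin

definition ext where "ext A B f = (if (A, B, f) \<in> op_dom C (Id1 C X) S then E A B f else undefined)"

lemma dom1_I: "dom1 C (Id1 C X) = X" using I by (simp add: hom_def)
lemma dom1_S: "dom1 C S = X" using S by (simp add: hom_def)

lemma opdom_iff: "(A, B, f) \<in> op_dom C (Id1 C X) S \<longleftrightarrow>
   (\<exists>Ob\<in>Obj C. A \<in> hom C Ob X \<and> B \<in> hom C Ob X \<and> f \<in> cell C A (Comp1 C S B))"
  unfolding op_dom_def dom1_I dom1_S using IB by auto

lemma ext_E: "A \<in> hom C Ob X \<Longrightarrow> B \<in> hom C Ob X \<Longrightarrow> f \<in> cell C A (Comp1 C S B) \<Longrightarrow> ext A B f = E A B f"
proof -
  assume a: "A \<in> hom C Ob X" "B \<in> hom C Ob X" "f \<in> cell C A (Comp1 C S B)"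
  have "Ob \<in> Obj C" using hom_arr[OF a(1)] by blast
  then show ?thesis unfolding ext_def opdom_iff using a by auto
qed

lemma operator: "is_operator C (Id1 C X) S S S ext"
  unfolding is_operator_def
proof (intro conjI ballI allI impI; clarsimp simp: opdom_iff)
  fix A B f Ob assume A: "A \<in> hom C Ob X" and B: "B \<in> hom C Ob X" and f: "f \<in> cell C A (Comp1 C S B)"
    and Ob: "Ob \<in> Obj C"
  show "ext A B f \<in> cell C (Comp1 C S A) (Comp1 C S B)" using ext_E[OF A B f] E_cell[OF A B f] by simp
  {
    fix Ob' P assume Ob': "Ob' \<in> Obj C" and P: "P \<in> hom C Ob' (dom1 C A)"
    have P': "P \<in> hom C Ob' Ob" using P A by (simp add: hom_def)
    have AP: "Comp1 C A P \<in> hom C Ob' X" and BP: "Comp1 C B P \<in> hom C Ob' X" using comp1_hom P' A B by blast+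
    have fP: "rwhisk C f P \<in> cell C (Comp1 C A P) (Comp1 C S (Comp1 C B P))"
      using rwhisk_cell[OF f A P'] comp1_assoc[OF P' B S] by simp
    have Sf: "lwhisk C S f \<in> cell C (Comp1 C S A) (Comp1 C S (Comp1 C S B))" by (rule Sk[OF f A])
    have "ext (Comp1 C A P) (Comp1 C B P) (rwhisk C f P) = E (Comp1 C A P) (Comp1 C B P) (rwhisk C f P)"
      by (rule ext_E[OF AP BP fP])
    also have "\<dots> = VComp C (rwhisk C (rwhisk C m B) P) (rwhisk C (lwhisk C S f) P)"
      unfolding E_def using rwhisk_rwhisk[OF m SS B P'] lwhisk_rwhisk[OF f A P' S] by simp
    also have "\<dots> = rwhisk C (E A B f) P" unfolding E_def
      using rwhisk_vcomp[OF Sf mB[OF B] SB[OF A] P'] by simp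
    finally show "ext (Comp1 C A P) (Comp1 C B P) (rwhisk C f P) = rwhisk C (ext A B f) P"
      using ext_E[OF A B f] by simp
  }
  {
    fix A' \<alpha> assume \<alpha>: "\<alpha> \<in> cell C A' A"
    have A': "A' \<in> hom C Ob X" using cell_dom_hom[OF \<alpha> A] .
    have e1: "lwhisk C (Id1 C X) \<alpha> = \<alpha>" using lwhisk_Id1[OF \<alpha> A'] .
    have fa: "VComp C f \<alpha> \<in> cell C A' (Comp1 C S B)" using vcomp_cell[OF \<alpha> f] .
    have "ext A' B (VComp C f \<alpha>) = VComp C (rwhisk C m B) (VComp C (lwhisk C S f) (lwhisk C S \<alpha>))"
      using ext_E[OF A' B fa] lwhisk_vcomp[OF \<alpha> f A' S] by (simp add: E_def)
    also have "\<dots> = VComp C (E A B f) (lwhisk C S \<alpha>)"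
      unfolding E_def using vcomp_assoc[OF Sk[OF \<alpha> A'] Sk[OF f A] mB[OF B]] .
    finally show "ext A' B (VComp C f (lwhisk C (Id1 C X) \<alpha>)) = VComp C (ext A B f) (lwhisk C S \<alpha>)"
      using e1 ext_E[OF A B f] by simp
  }
  {
    fix B' \<beta> assume \<beta>: "\<beta> \<in> cell C B B'"
    have B': "B' \<in> hom C Ob X" using cell_cod_hom[OF \<beta> B] .
    have Sb: "lwhisk C S \<beta> \<in> cell C (Comp1 C S B) (Comp1 C S B')" by (rule Sk[OF \<beta> B])
    have SSb: "lwhisk C S (lwhisk C S \<beta>) \<in> cell C (Comp1 C S (Comp1 C S B)) (Comp1 C S (Comp1 C S B'))"
      by (rule Sk[OF Sb SB[OF B]])
    have bf: "VComp C (lwhisk C S \<beta>) f \<in> cell C A (Comp1 C S B')" using vcomp_cell[OF f Sb] .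
    have nat: "VComp C (rwhisk C m B') (lwhisk C S (lwhisk C S \<beta>)) = VComp C (lwhisk C S \<beta>) (rwhisk C m B)"
      using natural[OF \<beta> m B SS] lwhisk_lwhisk[OF \<beta> B S S] by simp
    have "ext A B' (VComp C (lwhisk C S \<beta>) f) = VComp C (rwhisk C m B') (VComp C (lwhisk C S (lwhisk C S \<beta>)) (lwhisk C S f))"
      using ext_E[OF A B' bf] lwhisk_vcomp[OF f Sb A S] by (simp add: E_def)
    also have "\<dots> = VComp C (VComp C (rwhisk C m B') (lwhisk C S (lwhisk C S \<beta>))) (lwhisk C S f)"
      using vcomp_assoc[OF Sk[OF f A] SSb mB[OF B']] .
    also have "\<dots> = VComp C (VComp C (lwhisk C S \<beta>) (rwhisk C m B)) (lwhisk C S f)" using nat by simp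
    also have "\<dots> = VComp C (lwhisk C S \<beta>) (E A B f)"
      unfolding E_def using vcomp_assoc[OF Sk[OF f A] mB[OF B] Sb] by simp
    finally show "ext A B' (VComp C (lwhisk C S \<beta>) f) = VComp C (lwhisk C S \<beta>) (ext A B f)"
      using ext_E[OF A B f] by simp
  }
next
  fix A B f assume "\<forall>Ob\<in>Obj C. B \<in> hom C Ob X \<longrightarrow> A \<in> hom C Ob X \<longrightarrow> f \<notin> cell C A (Comp1 C S B)"
  then show "ext A B f = undefined" unfolding ext_def opdom_iff by auto
qed

lemma relmonad: "is_relmonad C \<lparr>rX0 = X, rX = X, rI = Id1 C X, rS = S, rext = ext, runit = s\<rparr>"
  unfolding is_relmonad_def Let_def
proof (simp only: relmonad_data.simps, intro conjI ballI)
  show "X \<in> Obj C" by (rule X)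
  show "X \<in> Obj C" by (rule X)
  show "Id1 C X \<in> hom C X X" by (rule I)
  show "S \<in> hom C X X" by (rule S)
  show "is_operator C (Id1 C X) S S S ext" by (rule operator)
  show "s \<in> cell C (Id1 C X) S" by (rule s)
  fix Ob A B k assume Ob: "Ob \<in> Obj C" and A: "A \<in> hom C Ob X" and B: "B \<in> hom C Ob X"
    and k: "k \<in> cell C (Comp1 C (Id1 C X) A) (Comp1 C S B)"
  have k': "k \<in> cell C A (Comp1 C S B)" using k IB[OF A] by simp
  show "VComp C (ext A B k) (rwhisk C s A) = k" using R1[OF A B k'] ext_E[OF A B k'] by simp
next
  fix Ob A assume Ob: "Ob \<in> Obj C" and A: "A \<in> hom C Ob X"
  show "ext A A (rwhisk C s A) = Id2 C (Comp1 C S A)" using R2[OF A] ext_E[OF A A sB[OF A]] by simp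
next
  fix Ob A B D k l assume Ob: "Ob \<in> Obj C" and A: "A \<in> hom C Ob X" and B: "B \<in> hom C Ob X"
    and D: "D \<in> hom C Ob X"
    and k: "k \<in> cell C (Comp1 C (Id1 C X) A) (Comp1 C S B)"
    and l: "l \<in> cell C (Comp1 C (Id1 C X) B) (Comp1 C S D)"
  have k': "k \<in> cell C A (Comp1 C S B)" using k IB[OF A] by simp
  have l': "l \<in> cell C B (Comp1 C S D)" using l IB[OF B] by simp
  have c: "VComp C (E B D l) k \<in> cell C A (Comp1 C S D)" using vcomp_cell[OF k' E_cell[OF B D l']] .
  show "ext A D (VComp C (ext B D l) k) = VComp C (ext B D l) (ext A B k)"
    using R3[OF A B D k' l'] ext_E[OF A B k'] ext_E[OF B D l'] ext_E[OF A D c] by simp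
qed

lemma E_m: "E S (Id1 C X) (Id2 C (Comp1 C S (Id1 C X))) = m"
proof -
  have "E S (Id1 C X) (Id2 C (Comp1 C S (Id1 C X))) = VComp C (rwhisk C m (Id1 C X)) (lwhisk C S (Id2 C S))"
    unfolding E_def using comp1_idr[OF S] by simp
  also have "\<dots> = VComp C m (Id2 C (Comp1 C S S))" using rwhisk_Id1[OF m SS] lwhisk_id2[OF S S] by simp
  also have "\<dots> = m" using vcomp_idr[OF m] .
  finally show ?thesis .
qed

lemma ext_m: "ext S (Id1 C X) (Id2 C (Comp1 C S (Id1 C X))) = m"
  using ext_E[OF S I] E_m id2_cell'[OF S] comp1_idr[OF S] comp1_idl[OF S] by simp

end

locale rmon = two_category +
  fixes X S e s
  assumes X: "X \<in> Obj C" and S: "S \<in> hom C X X"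
    and op: "is_operator C (Id1 C X) S S S e" and s: "s \<in> cell C (Id1 C X) S"
    and law1: "\<And>Ob A B k. Ob \<in> Obj C \<Longrightarrow> A \<in> hom C Ob X \<Longrightarrow> B \<in> hom C Ob X \<Longrightarrow>
        k \<in> cell C (Comp1 C (Id1 C X) A) (Comp1 C S B) \<Longrightarrow> VComp C (e A B k) (rwhisk C s A) = k"
    and law2: "\<And>Ob A. Ob \<in> Obj C \<Longrightarrow> A \<in> hom C Ob X \<Longrightarrow> e A A (rwhisk C s A) = Id2 C (Comp1 C S A)"
    and law3: "\<And>Ob A B D k l. Ob \<in> Obj C \<Longrightarrow> A \<in> hom C Ob X \<Longrightarrow> B \<in> hom C Ob X \<Longrightarrow> D \<in> hom C Ob X \<Longrightarrow>
        k \<in> cell C (Comp1 C (Id1 C X) A) (Comp1 C S B) \<Longrightarrow> l \<in> cell C (Comp1 C (Id1 C X) B) (Comp1 C S D) \<Longrightarrow>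
          e A D (VComp C (e B D l) k) = VComp C (e B D l) (e A B k)"
begin

definition m where "m = e S (Id1 C X) (Id2 C S)"

lemma I: "Id1 C X \<in> hom C X X" using id1_hom X by blast
lemma SS: "Comp1 C S S \<in> hom C X X" using comp1_hom S by blast
lemma IB: "B \<in> hom C Ob X \<Longrightarrow> Comp1 C (Id1 C X) B = B" using comp1_idl by blast
lemma dom1_I: "dom1 C (Id1 C X) = X" using I by (simp add: hom_def)
lemma dom1_S: "dom1 C S = X" using S by (simp add: hom_def)

lemma opdom_iff: "(A, B, f) \<in> op_dom C (Id1 C X) S \<longleftrightarrow>
   (\<exists>Ob\<in>Obj C. A \<in> hom C Ob X \<and> B \<in> hom C Ob X \<and> f \<in> cell C A (Comp1 C S B))"
  unfolding op_dom_def dom1_I dom1_S using IB by auto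

lemma opdomI: "A \<in> hom C Ob X \<Longrightarrow> B \<in> hom C Ob X \<Longrightarrow> f \<in> cell C A (Comp1 C S B) \<Longrightarrow>
   (A, B, f) \<in> op_dom C (Id1 C X) S"
  unfolding opdom_iff using hom_arr by blast

lemma op1: "(A, B, f) \<in> op_dom C (Id1 C X) S \<Longrightarrow> e A B f \<in> cell C (Comp1 C S A) (Comp1 C S B)"
  using op unfolding is_operator_def by blast
lemma op2: "(A, B, f) \<notin> op_dom C (Id1 C X) S \<Longrightarrow> e A B f = undefined"
  using op unfolding is_operator_def by blast
lemma op3: "(A, B, f) \<in> op_dom C (Id1 C X) S \<Longrightarrow> Ob' \<in> Obj C \<Longrightarrow> P \<in> hom C Ob' (dom1 C A) \<Longrightarrow>
   e (Comp1 C A P) (Comp1 C B P) (rwhisk C f P) = rwhisk C (e A B f) P"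
  using op unfolding is_operator_def by fast
lemma op4: "(A, B, f) \<in> op_dom C (Id1 C X) S \<Longrightarrow> \<alpha> \<in> cell C A' A \<Longrightarrow>
   e A' B (VComp C f (lwhisk C (Id1 C X) \<alpha>)) = VComp C (e A B f) (lwhisk C S \<alpha>)"
  using op unfolding is_operator_def by fast

lemma Sid: "Id2 C S \<in> cell C (Comp1 C (Id1 C X) S) (Comp1 C S (Id1 C X))"
  using id2_cell'[OF S] comp1_idl[OF S] comp1_idr[OF S] by simp

lemma m_dom: "(S, Id1 C X, Id2 C S) \<in> op_dom C (Id1 C X) S"
  using opdomI[OF S I] Sid comp1_idl[OF S] by simp

lemma m_cell: "m \<in> cell C (Comp1 C S S) S"
  using op1[OF m_dom] comp1_idr[OF S] unfolding m_def by simp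

lemma eE: assumes A: "A \<in> hom C Ob X" and B: "B \<in> hom C Ob X" and f: "f \<in> cell C A (Comp1 C S B)"
  shows "e A B f = VComp C (rwhisk C m B) (lwhisk C S f)"
proof -
  have Ob: "Ob \<in> Obj C" using hom_arr[OF A] by blast
  have SB: "Comp1 C S B \<in> hom C Ob X" using comp1_hom B S by blast
  have B': "B \<in> hom C Ob (dom1 C S)" using B dom1_S by simp
  have 1: "e (Comp1 C S B) B (Id2 C (Comp1 C S B)) = rwhisk C m B"
    using op3[OF m_dom Ob B'] comp1_idl[OF B] rwhisk_id2[OF S B] unfolding m_def by simp
  have d: "(Comp1 C S B, B, Id2 C (Comp1 C S B)) \<in> op_dom C (Id1 C X) S"
    using opdomI[OF SB B id2_cell'[OF SB]] .
  have "e A B (VComp C (Id2 C (Comp1 C S B)) (lwhisk C (Id1 C X) f)) = VComp C (e (Comp1 C S B) B (Id2 C (Comp1 C S B))) (lwhisk C S f)"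
    using op4[OF d f] .
  then show ?thesis using 1 lwhisk_Id1[OF f A] vcomp_idl[OF f] by simp
qed

lemma mon: "mon C X S m s"
proof -
  have Ob: "X \<in> Obj C" by (rule X)
  have sS: "rwhisk C s S \<in> cell C S (Comp1 C S S)" using rwhisk_cell[OF s I S] comp1_idl[OF S] by simp
  have ul: "VComp C m (rwhisk C s S) = Id2 C S"
    using law1[OF Ob S I, of "Id2 C S"] Sid comp1_idl[OF S] unfolding m_def by simp
  have ur: "VComp C m (lwhisk C S s) = Id2 C S"
  proof -
    have "e (Id1 C X) (Id1 C X) (rwhisk C s (Id1 C X)) = Id2 C S" using law2[OF Ob I] comp1_idr[OF S] by simp
    moreover have "rwhisk C s (Id1 C X) = s" using rwhisk_Id1[OF s I] .
    moreover have "e (Id1 C X) (Id1 C X) s = VComp C (rwhisk C m (Id1 C X)) (lwhisk C S s)"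
      using eE[OF I I] s comp1_idr[OF S] by simp
    ultimately show ?thesis using rwhisk_Id1[OF m_cell SS] by simp
  qed
  have as: "VComp C m (lwhisk C S m) = VComp C m (rwhisk C m S)"
  proof -
    have k: "Id2 C (Comp1 C S S) \<in> cell C (Comp1 C (Id1 C X) (Comp1 C S S)) (Comp1 C S S)"
      using id2_cell'[OF SS] comp1_idl[OF SS] by simp
    have l: "Id2 C S \<in> cell C (Comp1 C (Id1 C X) S) (Comp1 C S (Id1 C X))" by (rule Sid)
    have L3: "e (Comp1 C S S) (Id1 C X) (VComp C m (Id2 C (Comp1 C S S))) = VComp C m (e (Comp1 C S S) S (Id2 C (Comp1 C S S)))"
      using law3[OF Ob SS S I k l] unfolding m_def by simp
    have mm: "VComp C m (Id2 C (Comp1 C S S)) = m" using vcomp_idr[OF m_cell] .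
    have e1: "e (Comp1 C S S) (Id1 C X) m = VComp C m (lwhisk C S m)"
      using eE[OF SS I] m_cell comp1_idr[OF S] rwhisk_Id1[OF m_cell SS] by simp
    have e2: "e (Comp1 C S S) S (Id2 C (Comp1 C S S)) = VComp C (rwhisk C m S) (lwhisk C S (Id2 C (Comp1 C S S)))"
      using eE[OF SS S, of "Id2 C (Comp1 C S S)"] id2_cell'[OF SS] by simp
    have e3: "VComp C (rwhisk C m S) (lwhisk C S (Id2 C (Comp1 C S S))) = rwhisk C m S"
      using lwhisk_id2[OF SS S] vcomp_idr[OF rwhisk_cell[OF m_cell SS S]] comp1_assoc[OF S S S] by simp
    show ?thesis using L3 mm e1 e2 e3 by simp
  qed
  show ?thesis by (unfold_locales; (rule X S m_cell s as ul ur)?)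
qed

lemma ext_eq: "mon.ext C X S m = e"
proof (intro ext)
  fix A B f
  show "mon.ext C X S m A B f = e A B f"
  proof (cases "(A, B, f) \<in> op_dom C (Id1 C X) S")
    case True
    then obtain Ob where "A \<in> hom C Ob X" "B \<in> hom C Ob X" "f \<in> cell C A (Comp1 C S B)"
      unfolding opdom_iff by blast
    then show ?thesis using mon.ext_E[OF mon] eE mon.E_def[OF mon] by metis
  next
    case False
    then show ?thesis using op2 mon.ext_def[OF mon] by simp
  qed
qed

end

locale twomon = M1: mon C X S m s + M2: mon C Y T n t for C :: "('o,'a,'c) two_cat" and X S m s Y T n t +
  fixes F phi
  assumes F: "F \<in> hom C X Y" and phi: "phi \<in> cell C (Comp1 C F S) (Comp1 C T F)"
begin

lemma FS: "Comp1 C F S \<in> hom C X Y" using M1.comp1_hom[OF M1.S F] .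
lemma TF: "Comp1 C T F \<in> hom C X Y" using M1.comp1_hom[OF F M2.S] .

lemma ext_compat:
  assumes mult: "VComp C phi (lwhisk C F m) = VComp C (rwhisk C n F) (VComp C (lwhisk C T phi) (rwhisk C phi S))"
  and A: "A \<in> hom C Ob X" and B: "B \<in> hom C Ob X" and k: "k \<in> cell C A (Comp1 C S B)"
  shows "VComp C (rwhisk C phi B) (lwhisk C F (M1.E A B k)) =
    VComp C (M2.E (Comp1 C F A) (Comp1 C F B) (VComp C (rwhisk C phi B) (lwhisk C F k))) (rwhisk C phi A)"
proof -
  note S = M1.S and T = M2.S and comp = M1.comp1_hom and ass = M1.comp1_assoc
  have SB: "Comp1 C S B \<in> hom C Ob X" using comp B S by blast
  have SA: "Comp1 C S A \<in> hom C Ob X" using comp A S by blast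
  have SSB: "Comp1 C S (Comp1 C S B) \<in> hom C Ob X" using comp SB S by blast
  have FA: "Comp1 C F A \<in> hom C Ob Y" and FB: "Comp1 C F B \<in> hom C Ob Y" using comp A B F by blast+
  have a1: "Comp1 C (Comp1 C F S) B = Comp1 C F (Comp1 C S B)" using ass[OF B S F] by simp
  have a2: "Comp1 C (Comp1 C T F) B = Comp1 C T (Comp1 C F B)" using ass[OF B F T] by simp
  have a3: "Comp1 C (Comp1 C F S) A = Comp1 C F (Comp1 C S A)" using ass[OF A S F] by simp
  have a4: "Comp1 C (Comp1 C T F) A = Comp1 C T (Comp1 C F A)" using ass[OF A F T] by simp
  have a5: "Comp1 C (Comp1 C F S) (Comp1 C S B) = Comp1 C F (Comp1 C S (Comp1 C S B))" using ass[OF SB S F] by simp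
  have a6: "Comp1 C (Comp1 C T F) (Comp1 C S B) = Comp1 C T (Comp1 C F (Comp1 C S B))" using ass[OF SB F T] by simp
  have phiB: "rwhisk C phi B \<in> cell C (Comp1 C F (Comp1 C S B)) (Comp1 C T (Comp1 C F B))"
    using M1.rwhisk_cell[OF phi FS B] a1 a2 by simp
  have phiA: "rwhisk C phi A \<in> cell C (Comp1 C F (Comp1 C S A)) (Comp1 C T (Comp1 C F A))"
    using M1.rwhisk_cell[OF phi FS A] a3 a4 by simp
  have phiSB: "rwhisk C phi (Comp1 C S B) \<in> cell C (Comp1 C F (Comp1 C S (Comp1 C S B))) (Comp1 C T (Comp1 C F (Comp1 C S B)))"
    using M1.rwhisk_cell[OF phi FS SB] a5 a6 by simp
  have Fk: "lwhisk C F k \<in> cell C (Comp1 C F A) (Comp1 C F (Comp1 C S B))" using M1.lwhisk_cell[OF k A F] .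
  have Sk: "lwhisk C S k \<in> cell C (Comp1 C S A) (Comp1 C S (Comp1 C S B))" using M1.lwhisk_cell[OF k A S] .
  have FSk: "lwhisk C F (lwhisk C S k) \<in> cell C (Comp1 C F (Comp1 C S A)) (Comp1 C F (Comp1 C S (Comp1 C S B)))"
    using M1.lwhisk_cell[OF Sk SA F] .
  have TFk: "lwhisk C T (lwhisk C F k) \<in> cell C (Comp1 C T (Comp1 C F A)) (Comp1 C T (Comp1 C F (Comp1 C S B)))"
    using M1.lwhisk_cell[OF Fk FA T] .
  have mB: "rwhisk C m B \<in> cell C (Comp1 C S (Comp1 C S B)) (Comp1 C S B)" using M1.mB[OF B] .
  have FmB: "lwhisk C F (rwhisk C m B) \<in> cell C (Comp1 C F (Comp1 C S (Comp1 C S B))) (Comp1 C F (Comp1 C S B))"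
    using M1.lwhisk_cell[OF mB SSB F] .
  have TphiB: "lwhisk C T (rwhisk C phi B) \<in> cell C (Comp1 C T (Comp1 C F (Comp1 C S B))) (Comp1 C T (Comp1 C T (Comp1 C F B)))"
    using M1.lwhisk_cell[OF phiB _ T] comp SB F by blast
  have nFB: "rwhisk C n (Comp1 C F B) \<in> cell C (Comp1 C T (Comp1 C T (Comp1 C F B))) (Comp1 C T (Comp1 C F B))"
    using M2.mB[OF FB] .
  have Fm: "lwhisk C F m \<in> cell C (Comp1 C F (Comp1 C S S)) (Comp1 C F S)" using M1.lwhisk_cell[OF M1.m M1.SS F] .
  have phiS: "rwhisk C phi S \<in> cell C (Comp1 C F (Comp1 C S S)) (Comp1 C T (Comp1 C F S))"
    using M1.rwhisk_cell[OF phi FS S] ass[OF S S F] ass[OF S F T] by simp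
  have Tphi: "lwhisk C T phi \<in> cell C (Comp1 C T (Comp1 C F S)) (Comp1 C T (Comp1 C T F))"
    using M1.lwhisk_cell[OF phi FS T] .
  have nF: "rwhisk C n F \<in> cell C (Comp1 C T (Comp1 C T F)) (Comp1 C T F)"
    using M1.rwhisk_cell[OF M2.m M2.SS F] ass[OF F T T] by simp
  have FSSh: "Comp1 C F (Comp1 C S S) \<in> hom C X Y" using comp M1.SS F by blast
  have FSh: "Comp1 C F S \<in> hom C X Y" by (rule FS)
  have sq: "VComp C (rwhisk C phi B) (lwhisk C F (rwhisk C m B)) =
     VComp C (rwhisk C n (Comp1 C F B)) (VComp C (lwhisk C T (rwhisk C phi B)) (rwhisk C phi (Comp1 C S B)))"
  proof -
    have "VComp C (rwhisk C phi B) (lwhisk C F (rwhisk C m B)) = rwhisk C (VComp C phi (lwhisk C F m)) B"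
      using M1.rwhisk_vcomp[OF Fm phi FSSh B] M1.lwhisk_rwhisk[OF M1.m M1.SS B F] by simp
    also have "\<dots> = rwhisk C (VComp C (rwhisk C n F) (VComp C (lwhisk C T phi) (rwhisk C phi S))) B"
      using mult by simp
    also have "\<dots> = VComp C (rwhisk C (rwhisk C n F) B) (VComp C (rwhisk C (lwhisk C T phi) B) (rwhisk C (rwhisk C phi S) B))"
      using M1.rwhisk_vcomp[OF M1.vcomp_cell[OF phiS Tphi] nF FSSh B] M1.rwhisk_vcomp[OF phiS Tphi FSSh B] by simp
    also have "\<dots> = VComp C (rwhisk C n (Comp1 C F B)) (VComp C (lwhisk C T (rwhisk C phi B)) (rwhisk C phi (Comp1 C S B)))"
      using M1.rwhisk_rwhisk[OF M2.m M2.SS F B] M1.lwhisk_rwhisk[OF phi FS B T] M1.rwhisk_rwhisk[OF phi FS S B] by simp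
    finally show ?thesis .
  qed
  have nat: "VComp C (rwhisk C phi (Comp1 C S B)) (lwhisk C F (lwhisk C S k)) = VComp C (lwhisk C T (lwhisk C F k)) (rwhisk C phi A)"
    using M1.natural[OF k phi A FS] M1.lwhisk_lwhisk[OF k A S F] M1.lwhisk_lwhisk[OF k A F T] by simp
  have "VComp C (rwhisk C phi B) (lwhisk C F (M1.E A B k)) =
      VComp C (rwhisk C phi B) (VComp C (lwhisk C F (rwhisk C m B)) (lwhisk C F (lwhisk C S k)))"
    unfolding M1.E_def using M1.lwhisk_vcomp[OF Sk mB SA F] by simp
  also have "\<dots> = VComp C (VComp C (rwhisk C phi B) (lwhisk C F (rwhisk C m B))) (lwhisk C F (lwhisk C S k))"
    using M1.vcomp_assoc[OF FSk FmB phiB] .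
  also have "\<dots> = VComp C (VComp C (rwhisk C n (Comp1 C F B)) (VComp C (lwhisk C T (rwhisk C phi B)) (rwhisk C phi (Comp1 C S B)))) (lwhisk C F (lwhisk C S k))"
    using sq by simp
  also have "\<dots> = VComp C (rwhisk C n (Comp1 C F B)) (VComp C (VComp C (lwhisk C T (rwhisk C phi B)) (rwhisk C phi (Comp1 C S B))) (lwhisk C F (lwhisk C S k)))"
    using M1.vcomp_assoc[OF FSk M1.vcomp_cell[OF phiSB TphiB] nFB] by simp
  also have "\<dots> = VComp C (rwhisk C n (Comp1 C F B)) (VComp C (lwhisk C T (rwhisk C phi B)) (VComp C (rwhisk C phi (Comp1 C S B)) (lwhisk C F (lwhisk C S k))))"
    using M1.vcomp_assoc[OF FSk phiSB TphiB] by simp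
  also have "\<dots> = VComp C (rwhisk C n (Comp1 C F B)) (VComp C (lwhisk C T (rwhisk C phi B)) (VComp C (lwhisk C T (lwhisk C F k)) (rwhisk C phi A)))"
    using nat by simp
  also have "\<dots> = VComp C (rwhisk C n (Comp1 C F B)) (VComp C (VComp C (lwhisk C T (rwhisk C phi B)) (lwhisk C T (lwhisk C F k))) (rwhisk C phi A))"
    using M1.vcomp_assoc[OF phiA TFk TphiB] by simp
  also have "\<dots> = VComp C (VComp C (rwhisk C n (Comp1 C F B)) (VComp C (lwhisk C T (rwhisk C phi B)) (lwhisk C T (lwhisk C F k)))) (rwhisk C phi A)"
    using M1.vcomp_assoc[OF phiA M1.vcomp_cell[OF TFk TphiB] nFB] .
  also have "\<dots> = VComp C (M2.E (Comp1 C F A) (Comp1 C F B) (VComp C (rwhisk C phi B) (lwhisk C F k))) (rwhisk C phi A)"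
    unfolding M2.E_def using M1.lwhisk_vcomp[OF Fk phiB FA T] by simp
  finally show ?thesis .
qed

lemma mult_from_ext:
  assumes h: "VComp C (rwhisk C phi (Id1 C X)) (lwhisk C F (M1.ext S (Id1 C X) (Id2 C S))) =
    VComp C (M2.ext (Comp1 C F S) (Comp1 C F (Id1 C X)) (VComp C (rwhisk C phi (Id1 C X)) (lwhisk C F (Id2 C S)))) (rwhisk C phi S)"
  shows "VComp C phi (lwhisk C F m) = VComp C (rwhisk C n F) (VComp C (lwhisk C T phi) (rwhisk C phi S))"
proof -
  note S = M1.S and T = M2.S and ass = M1.comp1_assoc
  have e1: "M1.ext S (Id1 C X) (Id2 C S) = m" using M1.ext_m M1.comp1_idr[OF S] by simp
  have e2: "rwhisk C phi (Id1 C X) = phi" using M1.rwhisk_Id1[OF phi FS] .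
  have e3: "VComp C phi (lwhisk C F (Id2 C S)) = phi" using M1.lwhisk_id2[OF S F] M1.vcomp_idr[OF phi] by simp
  have e4: "Comp1 C F (Id1 C X) = F" using M1.comp1_idr[OF F] .
  have e5: "M2.ext (Comp1 C F S) F phi = M2.E (Comp1 C F S) F phi" using M2.ext_E[OF FS F phi] .
  have phiS: "rwhisk C phi S \<in> cell C (Comp1 C F (Comp1 C S S)) (Comp1 C T (Comp1 C F S))"
    using M1.rwhisk_cell[OF phi FS S] ass[OF S S F] ass[OF S F T] by simp
  have Tphi: "lwhisk C T phi \<in> cell C (Comp1 C T (Comp1 C F S)) (Comp1 C T (Comp1 C T F))"
    using M1.lwhisk_cell[OF phi FS T] .
  have nF: "rwhisk C n F \<in> cell C (Comp1 C T (Comp1 C T F)) (Comp1 C T F)"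
    using M1.rwhisk_cell[OF M2.m M2.SS F] ass[OF F T T] by simp
  show ?thesis using h e1 e2 e3 e4 e5 M1.vcomp_assoc[OF phiS Tphi nF] unfolding M2.E_def by simp
qed

end

lemma monad_mon: "two_category K \<Longrightarrow> is_monad K M \<Longrightarrow> mon K (mX M) (mS M) (mmul M) (munit M)"
  unfolding is_monad_def Let_def mon_def mon_axioms_def by blast

lemma P0_eq: assumes "two_category K" "is_monad K M"
  shows "mnd_to_rmd_obj K M = \<lparr>rX0 = mX M, rX = mX M, rI = Id1 K (mX M), rS = mS M,
     rext = mon.ext K (mX M) (mS M) (mmul M), runit = munit M\<rparr>"
proof -
  interpret mon K "mX M" "mS M" "mmul M" "munit M" using monad_mon[OF assms] .
  show ?thesis unfolding mnd_to_rmd_obj_def by (simp add: ext_def E_def fun_eq_iff)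
qed

lemma P0_rel: assumes "two_category K" "is_monad K M"
  shows "is_relmonad K (mnd_to_rmd_obj K M)"
proof -
  interpret mon K "mX M" "mS M" "mmul M" "munit M" using monad_mon[OF assms] .
  show ?thesis using relmonad P0_eq[OF assms] by simp
qed

lemma cell1_unpack: assumes "is_mnd_cell1 K f" and K: "two_category K"
  shows "twomon K (mX (msrc f)) (mS (msrc f)) (mmul (msrc f)) (munit (msrc f))
                 (mX (mtgt f)) (mS (mtgt f)) (mmul (mtgt f)) (munit (mtgt f)) (mF f) (mphi f)"
    and "is_monad K (msrc f)" "is_monad K (mtgt f)"
    and "VComp K (mphi f) (lwhisk K (mF f) (munit (msrc f))) = rwhisk K (munit (mtgt f)) (mF f)"
    and "VComp K (mphi f) (lwhisk K (mF f) (mmul (msrc f))) = VComp K (rwhisk K (mmul (mtgt f)) (mF f))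
          (VComp K (lwhisk K (mS (mtgt f)) (mphi f)) (rwhisk K (mphi f) (mS (msrc f))))"
  using assms monad_mon[OF K] unfolding is_mnd_cell1_def Let_def twomon_def twomon_axioms_def by auto

lemma P1_cell: assumes K: "two_category K" and f: "is_mnd_cell1 K f"
  shows "is_rmd_cell1 K (mnd_to_rmd_1 K f)"
proof -
  interpret twomon K "mX (msrc f)" "mS (msrc f)" "mmul (msrc f)" "munit (msrc f)"
                 "mX (mtgt f)" "mS (mtgt f)" "mmul (mtgt f)" "munit (mtgt f)" "mF f" "mphi f"
    by (rule cell1_unpack(1)[OF f K])
  note u = cell1_unpack[OF f K]
  let ?X = "mX (msrc f)" and ?Y = "mX (mtgt f)" and ?S = "mS (msrc f)" and ?T = "mS (mtgt f)"
  have idc: "Comp1 K (mF f) (Id1 K ?X) = Comp1 K (Id1 K ?Y) (mF f)"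
    using M1.comp1_idr[OF F] M1.comp1_idl[OF F] by simp
  show ?thesis
    unfolding is_rmd_cell1_def Let_def mnd_to_rmd_1_def rmd_cell1.simps
    unfolding P0_eq[OF K u(2)] P0_eq[OF K u(3)] relmonad_data.simps
  proof (intro conjI ballI)
    fix Ob A B k assume Ob: "Ob \<in> Obj K" and A: "A \<in> hom K Ob ?X" and B: "B \<in> hom K Ob ?X"
      and k: "k \<in> cell K (Comp1 K (Id1 K ?X) A) (Comp1 K ?S B)"
    have k': "k \<in> cell K A (Comp1 K ?S B)" using k M1.IB[OF A] by simp
    have FA: "Comp1 K (mF f) A \<in> hom K Ob ?Y" and FB: "Comp1 K (mF f) B \<in> hom K Ob ?Y"
      using M1.comp1_hom A B F by blast+
    have phiB: "rwhisk K (mphi f) B \<in> cell K (Comp1 K (mF f) (Comp1 K ?S B)) (Comp1 K ?T (Comp1 K (mF f) B))"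
      using M1.rwhisk_cell[OF phi FS B] M1.comp1_assoc[OF B M1.S F] M1.comp1_assoc[OF B F M2.S] by simp
    have g: "VComp K (rwhisk K (mphi f) B) (lwhisk K (mF f) k) \<in> cell K (Comp1 K (mF f) A) (Comp1 K ?T (Comp1 K (mF f) B))"
      using M1.vcomp_cell[OF M1.lwhisk_cell[OF k' A F] phiB] .
    show "VComp K (rwhisk K (mphi f) B) (lwhisk K (mF f) (M1.ext A B k)) =
       VComp K (M2.ext (Comp1 K (mF f) A) (Comp1 K (mF f) B) (VComp K (rwhisk K (mphi f) B) (lwhisk K (mF f) k)))
        (rwhisk K (mphi f) A)"
      using ext_compat[OF u(5) A B k'] M1.ext_E[OF A B k'] M2.ext_E[OF FA FB g] by simp
  qed (use u F phi idc P0_rel[OF K u(3)] P0_eq[OF K u(3)] P0_rel[OF K u(2)] P0_eq[OF K u(2)] in simp_all)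
qed

lemma P2_cell: assumes K: "two_category K" and c: "is_mnd_cell2 K c"
  shows "is_rmd_cell2 K (mnd_to_rmd_2 K c)"
proof -
  have f: "is_mnd_cell1 K (m2src c)" and g: "is_mnd_cell1 K (m2tgt c)"
    and st: "msrc (m2src c) = msrc (m2tgt c)" "mtgt (m2src c) = mtgt (m2tgt c)"
    and p: "m2p c \<in> cell K (mF (m2src c)) (mF (m2tgt c))"
    and sq: "VComp K (mphi (m2tgt c)) (rwhisk K (m2p c) (mS (msrc (m2src c)))) =
             VComp K (lwhisk K (mS (mtgt (m2src c))) (m2p c)) (mphi (m2src c))"
    using c unfolding is_mnd_cell2_def Let_def by auto
  interpret two_category K by (rule K)
  have Fh: "mF (m2src c) \<in> hom K (mX (msrc (m2src c))) (mX (mtgt (m2src c)))"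
    using f unfolding is_mnd_cell1_def Let_def by auto
  have e: "lwhisk K (Id1 K (mX (mtgt (m2src c)))) (m2p c) = m2p c" using lwhisk_Id1[OF p Fh] .
  have e2: "rwhisk K (m2p c) (Id1 K (mX (msrc (m2src c)))) = m2p c" using rwhisk_Id1[OF p Fh] .
  have m1: "is_monad K (msrc (m2src c))" "is_monad K (mtgt (m2src c))"
    using f unfolding is_mnd_cell1_def Let_def by auto
  show ?thesis
    unfolding is_rmd_cell2_def Let_def mnd_to_rmd_2_def rmd_cell2.simps mnd_to_rmd_1_def rmd_cell1.simps
    using P1_cell[OF K f] P1_cell[OF K g] st p sq e e2 P0_eq[OF K m1(1)] P0_eq[OF K m1(2)]
    by (simp add: mnd_to_rmd_1_def)
qed

lemma P1_comp: "mnd_to_rmd_1 K (mnd_comp1 K g f) = rmd_comp1 K (mnd_to_rmd_1 K g) (mnd_to_rmd_1 K f)"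
  by (simp add: mnd_to_rmd_1_def mnd_comp1_def rmd_comp1_def)

lemma partA: assumes K: "two_category K"
  shows "two_functor (Mnd K) (Rmd K) (mnd_to_rmd_obj K) (mnd_to_rmd_1 K) (mnd_to_rmd_2 K)"
  unfolding two_functor_def
proof (intro conjI ballI)
  fix x assume "x \<in> Obj (Mnd K)"
  then show "mnd_to_rmd_obj K x \<in> Obj (Rmd K)" using P0_rel[OF K] by (simp add: Mnd_def Rmd_def)
next
  fix x y f assume "f \<in> hom (Mnd K) x y"
  then show "mnd_to_rmd_1 K f \<in> hom (Rmd K) (mnd_to_rmd_obj K x) (mnd_to_rmd_obj K y)"
    using P1_cell[OF K] by (auto simp: Mnd_def Rmd_def hom_def mnd_to_rmd_1_def)
next
  fix f g \<alpha> assume "\<alpha> \<in> cell (Mnd K) f g"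
  then show "mnd_to_rmd_2 K \<alpha> \<in> cell (Rmd K) (mnd_to_rmd_1 K f) (mnd_to_rmd_1 K g)"
    using P2_cell[OF K] by (auto simp: Mnd_def Rmd_def cell_def mnd_to_rmd_2_def)
next
  fix x assume "x \<in> Obj (Mnd K)"
  then show "mnd_to_rmd_1 K (Id1 (Mnd K) x) = Id1 (Rmd K) (mnd_to_rmd_obj K x)"
    by (simp add: Mnd_def Rmd_def mnd_to_rmd_1_def mnd_to_rmd_obj_def)
next
  fix x y z f g
  show "mnd_to_rmd_1 K (Comp1 (Mnd K) g f) = Comp1 (Rmd K) (mnd_to_rmd_1 K g) (mnd_to_rmd_1 K f)"
    by (simp add: Mnd_def Rmd_def P1_comp)
next
  fix f show "mnd_to_rmd_2 K (Id2 (Mnd K) f) = Id2 (Rmd K) (mnd_to_rmd_1 K f)"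
    by (simp add: Mnd_def Rmd_def mnd_to_rmd_1_def mnd_to_rmd_2_def)
next
  fix f g h \<alpha> \<beta>
  show "mnd_to_rmd_2 K (VComp (Mnd K) \<beta> \<alpha>) = VComp (Rmd K) (mnd_to_rmd_2 K \<beta>) (mnd_to_rmd_2 K \<alpha>)"
    by (simp add: Mnd_def Rmd_def mnd_to_rmd_2_def)
next
  fix \<alpha> \<beta>
  show "mnd_to_rmd_2 K (HComp (Mnd K) \<beta> \<alpha>) = HComp (Rmd K) (mnd_to_rmd_2 K \<beta>) (mnd_to_rmd_2 K \<alpha>)"
    by (simp add: Mnd_def Rmd_def mnd_to_rmd_2_def P1_comp)
qed

lemma partB: assumes K: "two_category K"
  shows "inj_on (mnd_to_rmd_obj K) (Obj (Mnd K))"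
proof (rule inj_onI)
  fix M N assume M: "M \<in> Obj (Mnd K)" and N: "N \<in> Obj (Mnd K)" and eq: "mnd_to_rmd_obj K M = mnd_to_rmd_obj K N"
  have Mm: "is_monad K M" and Nm: "is_monad K N" using M N by (auto simp: Mnd_def)
  interpret A: mon K "mX M" "mS M" "mmul M" "munit M" using monad_mon[OF K Mm] .
  interpret B: mon K "mX N" "mS N" "mmul N" "munit N" using monad_mon[OF K Nm] .
  have e: "mX M = mX N" "mS M = mS N" "munit M = munit N" using eq P0_eq[OF K Mm] P0_eq[OF K Nm] by simp_all
  have "rext (mnd_to_rmd_obj K M) = rext (mnd_to_rmd_obj K N)" using eq by simp
  then have ee: "A.ext = B.ext" unfolding P0_eq[OF K Mm] P0_eq[OF K Nm] by simp
  have "mmul M = mmul N" using A.ext_m B.ext_m ee e by metis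
  then show "M = N" using e by (simp add: monad_data.equality)
qed

lemma partC: assumes K: "two_category K"
  shows "mnd_to_rmd_obj K ` Obj (Mnd K) = {R \<in> Obj (Rmd K). rX0 R = rX R \<and> rI R = Id1 K (rX R)}"
proof
  show "mnd_to_rmd_obj K ` Obj (Mnd K) \<subseteq> {R \<in> Obj (Rmd K). rX0 R = rX R \<and> rI R = Id1 K (rX R)}"
    using P0_rel[OF K] P0_eq[OF K] by (auto simp: Mnd_def Rmd_def)
next
  show "{R \<in> Obj (Rmd K). rX0 R = rX R \<and> rI R = Id1 K (rX R)} \<subseteq> mnd_to_rmd_obj K ` Obj (Mnd K)"
  proof clarify
    fix R assume R: "R \<in> Obj (Rmd K)" and e0: "rX0 R = rX R" and eI: "rI R = Id1 K (rX R)"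
    have Rr: "is_relmonad K R" using R by (simp add: Rmd_def)
    interpret rmon K "rX R" "rS R" "rext R" "runit R"
      using Rr K e0 eI unfolding is_relmonad_def Let_def rmon_def rmon_axioms_def by auto
    interpret mon K "rX R" "rS R" m "runit R" by (rule mon)
    define M where "M = \<lparr>mX = rX R, mS = rS R, mmul = m, munit = runit R\<rparr>"
    have Mm: "is_monad K M" unfolding M_def is_monad_def Let_def
      using X S m s assoc unitl unitr by simp
    have "mnd_to_rmd_obj K M = R" using P0_eq[OF K Mm] ext_eq e0 eI unfolding M_def
      by (simp add: relmonad_data.equality)
    then show "R \<in> mnd_to_rmd_obj K ` Obj (Mnd K)" using Mm by (force simp: Mnd_def)
  qed
qed

lemma partD1: assumes K: "two_category K" and x: "x \<in> Obj (Mnd K)" and y: "y \<in> Obj (Mnd K)"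
  shows "bij_betw (mnd_to_rmd_1 K) (hom (Mnd K) x y) (hom (Rmd K) (mnd_to_rmd_obj K x) (mnd_to_rmd_obj K y))"
  unfolding bij_betw_def
proof (intro conjI)
  show "inj_on (mnd_to_rmd_1 K) (hom (Mnd K) x y)"
    by (rule inj_onI) (auto simp: hom_def Mnd_def mnd_to_rmd_1_def intro: mnd_cell1.equality)
  show "mnd_to_rmd_1 K ` hom (Mnd K) x y = hom (Rmd K) (mnd_to_rmd_obj K x) (mnd_to_rmd_obj K y)"
  proof
    show "mnd_to_rmd_1 K ` hom (Mnd K) x y \<subseteq> hom (Rmd K) (mnd_to_rmd_obj K x) (mnd_to_rmd_obj K y)"
      using P1_cell[OF K] by (auto simp: Mnd_def Rmd_def hom_def mnd_to_rmd_1_def)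
  next
    show "hom (Rmd K) (mnd_to_rmd_obj K x) (mnd_to_rmd_obj K y) \<subseteq> mnd_to_rmd_1 K ` hom (Mnd K) x y"
    proof
      fix g assume g: "g \<in> hom (Rmd K) (mnd_to_rmd_obj K x) (mnd_to_rmd_obj K y)"
      have xm: "is_monad K x" and ym: "is_monad K y" using x y by (auto simp: Mnd_def)
      interpret M1: mon K "mX x" "mS x" "mmul x" "munit x" using monad_mon[OF K xm] .
      interpret M2: mon K "mX y" "mS y" "mmul y" "munit y" using monad_mon[OF K ym] .
      have gr: "is_rmd_cell1 K g" and gs: "rsrc g = mnd_to_rmd_obj K x" and gt: "rtgt g = mnd_to_rmd_obj K y"
        using g by (auto simp: Rmd_def hom_def)
      note G = gr[unfolded is_rmd_cell1_def Let_def gs gt P0_eq[OF K xm] P0_eq[OF K ym] relmonad_data.simps]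
      have F: "rF g \<in> hom K (mX x) (mX y)" and F0: "rF0 g \<in> hom K (mX x) (mX y)"
        and idc: "Comp1 K (rF g) (Id1 K (mX x)) = Comp1 K (Id1 K (mX y)) (rF0 g)"
        and phi0: "rphi g \<in> cell K (Comp1 K (rF g) (mS x)) (Comp1 K (mS y) (rF0 g))"
        and un0: "VComp K (rphi g) (lwhisk K (rF g) (munit x)) = rwhisk K (munit y) (rF0 g)"
        and ex0: "\<forall>Ob\<in>Obj K. \<forall>A\<in>hom K Ob (mX x). \<forall>B\<in>hom K Ob (mX x).
        \<forall>k\<in>cell K (Comp1 K (Id1 K (mX x)) A) (Comp1 K (mS x) B).
          VComp K (rwhisk K (rphi g) B) (lwhisk K (rF g) (M1.ext A B k)) =
          VComp K (M2.ext (Comp1 K (rF0 g) A) (Comp1 K (rF0 g) B) (VComp K (rwhisk K (rphi g) B) (lwhisk K (rF g) k)))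
                  (rwhisk K (rphi g) A)"
        using G by auto
      have FF: "rF0 g = rF g" using idc M1.comp1_idr[OF F] M1.comp1_idl[OF F0] by simp
      have phi: "rphi g \<in> cell K (Comp1 K (rF g) (mS x)) (Comp1 K (mS y) (rF g))" using phi0 FF by simp
      interpret TM: twomon K "mX x" "mS x" "mmul x" "munit x" "mX y" "mS y" "mmul y" "munit y" "rF g" "rphi g"
        by unfold_locales (rule F phi)+
      have inst: "VComp K (rwhisk K (rphi g) (Id1 K (mX x))) (lwhisk K (rF g) (M1.ext (mS x) (Id1 K (mX x)) (Id2 K (mS x)))) =
        VComp K (M2.ext (Comp1 K (rF g) (mS x)) (Comp1 K (rF g) (Id1 K (mX x))) (VComp K (rwhisk K (rphi g) (Id1 K (mX x))) (lwhisk K (rF g) (Id2 K (mS x))))) (rwhisk K (rphi g) (mS x))"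
        using ex0[rule_format, OF M1.X M1.S M1.I] FF M1.id2_cell'[OF M1.S] M1.comp1_idl[OF M1.S] M1.comp1_idr[OF M1.S] by simp
      have mult: "VComp K (rphi g) (lwhisk K (rF g) (mmul x)) = VComp K (rwhisk K (mmul y) (rF g)) (VComp K (lwhisk K (mS y) (rphi g)) (rwhisk K (rphi g) (mS x)))"
        by (rule TM.mult_from_ext[OF inst])
      define f where "f = \<lparr>msrc = x, mtgt = y, mF = rF g, mphi = rphi g\<rparr>"
      have fc: "is_mnd_cell1 K f" unfolding f_def is_mnd_cell1_def Let_def
        using xm ym F phi un0 FF mult by simp
      have "mnd_to_rmd_1 K f = g" unfolding f_def mnd_to_rmd_1_def using gs gt FF
        by (simp add: rmd_cell1.equality)
      moreover have "f \<in> hom (Mnd K) x y" using fc by (simp add: hom_def Mnd_def f_def)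
      ultimately show "g \<in> mnd_to_rmd_1 K ` hom (Mnd K) x y" by blast
    qed
  qed
qed

lemma partD2: assumes K: "two_category K" and f: "f \<in> hom (Mnd K) x y" and g: "g \<in> hom (Mnd K) x y"
  shows "bij_betw (mnd_to_rmd_2 K) (cell (Mnd K) f g) (cell (Rmd K) (mnd_to_rmd_1 K f) (mnd_to_rmd_1 K g))"
  unfolding bij_betw_def
proof (intro conjI)
  show "inj_on (mnd_to_rmd_2 K) (cell (Mnd K) f g)"
    by (rule inj_onI) (auto simp: cell_def Mnd_def mnd_to_rmd_2_def intro: mnd_cell2.equality)
  show "mnd_to_rmd_2 K ` cell (Mnd K) f g = cell (Rmd K) (mnd_to_rmd_1 K f) (mnd_to_rmd_1 K g)"
  proof
    show "mnd_to_rmd_2 K ` cell (Mnd K) f g \<subseteq> cell (Rmd K) (mnd_to_rmd_1 K f) (mnd_to_rmd_1 K g)"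
      using P2_cell[OF K] by (auto simp: Mnd_def Rmd_def cell_def mnd_to_rmd_2_def)
  next
    show "cell (Rmd K) (mnd_to_rmd_1 K f) (mnd_to_rmd_1 K g) \<subseteq> mnd_to_rmd_2 K ` cell (Mnd K) f g"
    proof
      fix c assume c: "c \<in> cell (Rmd K) (mnd_to_rmd_1 K f) (mnd_to_rmd_1 K g)"
      interpret two_category K by (rule K)
      have fc: "is_mnd_cell1 K f" and gc: "is_mnd_cell1 K g" and st: "msrc f = x" "mtgt f = y" "msrc g = x" "mtgt g = y"
        using f g by (auto simp: hom_def Mnd_def)
      have cr: "is_rmd_cell2 K c" and cs: "r2src c = mnd_to_rmd_1 K f" and ct: "r2tgt c = mnd_to_rmd_1 K g"
        using c by (auto simp: cell_def Rmd_def)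
      have xm: "is_monad K x" and ym: "is_monad K y" using fc st unfolding is_mnd_cell1_def Let_def by auto
      have Fh: "mF f \<in> hom K (mX x) (mX y)" using fc st unfolding is_mnd_cell1_def Let_def by auto
      note CC = cr[unfolded is_rmd_cell2_def Let_def cs ct]
      have p: "r2p c \<in> cell K (mF f) (mF g)" and p0: "r2p0 c \<in> cell K (mF f) (mF g)"
        and wh: "lwhisk K (Id1 K (mX y)) (r2p0 c) = rwhisk K (r2p c) (Id1 K (mX x))"
        and sq: "VComp K (mphi g) (rwhisk K (r2p c) (mS x)) = VComp K (lwhisk K (mS y) (r2p0 c)) (mphi f)"
        using CC st P0_eq[OF K xm] P0_eq[OF K ym] by (simp_all add: mnd_to_rmd_1_def)
      have pp: "r2p0 c = r2p c" using wh lwhisk_Id1[OF p0 Fh] rwhisk_Id1[OF p Fh] by simp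
      define a where "a = \<lparr>m2src = f, m2tgt = g, m2p = r2p c\<rparr>"
      have ac: "is_mnd_cell2 K a" unfolding a_def is_mnd_cell2_def Let_def
        using fc gc st p sq pp by simp
      have "mnd_to_rmd_2 K a = c" unfolding a_def mnd_to_rmd_2_def using cs ct pp
        by (simp add: rmd_cell2.equality)
      moreover have "a \<in> cell (Mnd K) f g" using ac by (simp add: cell_def Mnd_def a_def)
      ultimately show "c \<in> mnd_to_rmd_2 K ` cell (Mnd K) f g" by blast
    qed
  qed
qed

theorem mainTheorem6:
  fixes K :: "('o,'a,'c) two_cat"
  assumes "two_category K"
  shows "two_functor (Mnd K) (Rmd K) (mnd_to_rmd_obj K) (mnd_to_rmd_1 K) (mnd_to_rmd_2 K)
    \<and> inj_on (mnd_to_rmd_obj K) (Obj (Mnd K))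
    \<and> mnd_to_rmd_obj K ` Obj (Mnd K) = {R \<in> Obj (Rmd K). rX0 R = rX R \<and> rI R = Id1 K (rX R)}
    \<and> locally_iso (Mnd K) (Rmd K) (mnd_to_rmd_obj K) (mnd_to_rmd_1 K) (mnd_to_rmd_2 K)"
  using partA[OF assms] partB[OF assms] partC[OF assms] partD1[OF assms] partD2[OF assms]
  unfolding locally_iso_def by blast

end
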